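(* Let $d\geq 4$ and consider an ontological model that reproduces the quantum predictions for a quantum system with Hilbert space $\mathbb{C}^d$. Suppose that there is a constant $k$ such that \[ \omega_C(\mu_\psi,\mu_\phi) \geq k\,\omega_Q(\psi,\phi)\quad\text{for all pure states } \ket{\psi},\ket{\phi}. \] Then $k < 4/(d-1)$. If moreover $d$ is a prime power, then $k < 2/d$.
   Context: An ontological model for a quantum system with Hilbert space $\mathbb{C}^d$ consists of: a measure space $\Lambda$ of "ontic states" (with measure $\mathrm{d}\lambda$); for every pure state $\ket{\psi}$, an epistemic state $\mu_\psi$, i.e. a probability density on $\Lambda$ ($\mu_\psi(\lambda)\geq 0$, $\int_\Lambda \mu_\psi(\lambda)\,\mathrm{d}\lambda=1$); and for every projective measurement $M$ with outcomes $f$ (corresponding to orthogonal projectors $P_f$ summing to the identity), response functions $\xi_M(f|\lambda)\geq 0$ with $\sum_f \xi_M(f|\lambda)=1$ for all $\lambda$. The model reproduces the quantum predictions if $\int_\Lambda \xi_M(f|\lambda)\mu_\psi(\lambda)\,\mathrm{d}\lambda = \bra{\psi}P_f\ket{\psi}$ for all pure states $\ket{\psi}$, all projective measurements $M$ and outcomes $f$ (for a rank-one outcome $P_f=\ket{f}\bra{f}$ this is $|\braket{f|\psi}|^2$). The classical overlap of probability densities $p,q$ is $\omega_C(p,q)=\int \min\{p(x),q(x)\}\,\mathrm{d}x$. The quantum overlap of pure states is $\omega_Q(\psi,\phi)=1-\sqrt{1-|\braket{\psi|\phi}|^2}$. *)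

theory Defs
  imports "HOL-Analysis.Analysis" "HOL-Number_Theory.Prime_Powers"
begin

type_synonym 'd cvec = "complex ^ 'd"
type_synonym 'd cmat = "complex ^ 'd ^ 'd"

definition cinner :: "'d::finite cvec \<Rightarrow> 'd cvec \<Rightarrow> complex" where
  "cinner x y = (\<Sum>i\<in>UNIV. cnj (x $ i) * y $ i)"

definition pure_state :: "'d::finite cvec \<Rightarrow> bool" where
  "pure_state x \<longleftrightarrow> cinner x x = 1"

definition is_projector :: "'d::finite cmat \<Rightarrow> bool" where
  "is_projector P \<longleftrightarrow> (\<forall>i j. P $ i $ j = cnj (P $ j $ i)) \<and> P ** P = P"

text \<open>A projective measurement is a finite set of nonzero, mutually orthogonal
  projectors summing to the identity; its outcomes are identified with the projectors.\<close>
definition proj_measurement :: "'d::finite cmat set \<Rightarrow> bool" where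
  "proj_measurement Ms \<longleftrightarrow> finite Ms \<and>
     (\<forall>P\<in>Ms. is_projector P \<and> P \<noteq> 0) \<and>
     (\<forall>P\<in>Ms. \<forall>Q\<in>Ms. P \<noteq> Q \<longrightarrow> P ** Q = 0) \<and>
     sum (\<lambda>P. P) Ms = mat 1"

definition born :: "'d::finite cvec \<Rightarrow> 'd cmat \<Rightarrow> real" where
  "born psi P = Re (cinner psi (P *v psi))"

text \<open>Ontological model on the measure space (Lambda, dlambda) = M reproducing the quantum
  predictions: mu psi is a probability density for every pure state, xi Ms f is a
  (measurable) response function for every projective measurement Ms and outcome f.\<close>
definition onto_model_reproducing ::
  "'l measure \<Rightarrow> ('d::finite cvec \<Rightarrow> 'l \<Rightarrow> real) \<Rightarrow> ('d cmat set \<Rightarrow> 'd cmat \<Rightarrow> 'l \<Rightarrow> real) \<Rightarrow> bool" where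
  "onto_model_reproducing M mu xi \<longleftrightarrow>
     (\<forall>psi. pure_state psi \<longrightarrow>
        mu psi \<in> borel_measurable M \<and> (\<forall>x\<in>space M. 0 \<le> mu psi x) \<and>
        integrable M (mu psi) \<and> integral\<^sup>L M (mu psi) = 1) \<and>
     (\<forall>Ms. proj_measurement Ms \<longrightarrow>
        (\<forall>f\<in>Ms. xi Ms f \<in> borel_measurable M \<and> (\<forall>x\<in>space M. 0 \<le> xi Ms f x)) \<and>
        (\<forall>x\<in>space M. (\<Sum>f\<in>Ms. xi Ms f x) = 1)) \<and>
     (\<forall>psi Ms f. pure_state psi \<longrightarrow> proj_measurement Ms \<longrightarrow> f \<in> Ms \<longrightarrow>
        integral\<^sup>L M (\<lambda>x. xi Ms f x * mu psi x) = born psi f)"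

definition omega_C :: "'l measure \<Rightarrow> ('l \<Rightarrow> real) \<Rightarrow> ('l \<Rightarrow> real) \<Rightarrow> real" where
  "omega_C M p q = integral\<^sup>L M (\<lambda>x. min (p x) (q x))"

definition omega_Q :: "'d::finite cvec \<Rightarrow> 'd cvec \<Rightarrow> real" where
  "omega_Q psi phi = 1 - sqrt (1 - (cmod (cinner psi phi))\<^sup>2)"

end

theory Submission
  imports Defs
begin

lemma cinner_add_right: "cinner x (y + z) = cinner x y + cinner x z"
  by (simp add: cinner_def distrib_left sum.distrib)
lemma cinner_add_left: "cinner (x + y) z = cinner x z + cinner y z"
  by (simp add: cinner_def distrib_right sum.distrib)
lemma cinner_diff_right: "cinner x (y - z) = cinner x y - cinner x z"
  by (simp add: cinner_def right_diff_distrib sum_subtractf)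
lemma cinner_scale_right: "cinner x (c *s y) = c * cinner x y"
  by (simp add: cinner_def sum_distrib_left mult_ac)
lemma cinner_scale_left: "cinner (c *s x) y = cnj c * cinner x y"
  by (simp add: cinner_def sum_distrib_left mult_ac)
lemma cinner_cnj: "cnj (cinner x y) = cinner y x"
  by (simp add: cinner_def mult.commute)

definition nv :: "'d::finite cvec \<Rightarrow> real" where
  "nv x = (\<Sum>i\<in>UNIV. (cmod (x$i))^2)"

lemma cinner_self: "cinner x x = of_real (nv x)"
  unfolding cinner_def nv_def of_real_sum
  by (rule sum.cong) (simp_all add: complex_norm_square mult.commute del: of_real_power)

lemma nv_nonneg: "nv x \<ge> 0"
  by (simp add: nv_def sum_nonneg)

lemma nv_pos: assumes "x \<noteq> 0" shows "nv x > 0"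
proof -
  from assms obtain i where i: "x$i \<noteq> 0" by (metis vec_eq_iff zero_index)
  have "(cmod (x$i))^2 \<le> nv x" unfolding nv_def
    by (rule member_le_sum) auto
  moreover have "(cmod (x$i))^2 > 0" using i by simp
  ultimately show ?thesis by linarith
qed

lemma cinner_self_nz: "x \<noteq> 0 \<Longrightarrow> cinner x x \<noteq> 0"
  using nv_pos[of x] by (simp add: cinner_self)

definition proj :: "'d::finite cvec \<Rightarrow> 'd cmat" where
  "proj v = (\<chi> i j. v$i * cnj (v$j) / cinner v v)"

lemma proj_mult_vec: "proj v *v x = (cinner v x / cinner v v) *s v"
  by (simp add: proj_def matrix_vector_mult_def vec_eq_iff cinner_def
      sum_distrib_left sum_divide_distrib mult_ac)

lemma proj_mult_proj: "proj u ** proj v =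
   (\<chi> i j. u$i * cnj (v$j) * cinner u v / (cinner u u * cinner v v))"
proof -
  have "(proj u ** proj v) $ i $ j = u$i * cnj (v$j) * cinner u v / (cinner u u * cinner v v)" for i j
  proof -
    have "(proj u ** proj v) $ i $ j = (\<Sum>k\<in>UNIV. u$i * cnj (u$k) / cinner u u * (v$k * cnj (v$j) / cinner v v))"
      by (simp add: proj_def matrix_matrix_mult_def)
    also have "\<dots> = (\<Sum>k\<in>UNIV. (u$i * cnj (v$j) / (cinner u u * cinner v v)) * (cnj (u$k) * v$k))"
      by (intro sum.cong refl) (simp add: divide_inverse mult_ac inverse_mult_distrib)
    also have "\<dots> = (u$i * cnj (v$j) / (cinner u u * cinner v v)) * (\<Sum>k\<in>UNIV. cnj (u$k) * v$k)"
      by (simp add: sum_distrib_left)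
    also have "\<dots> = u$i * cnj (v$j) * cinner u v / (cinner u u * cinner v v)"
      by (simp add: cinner_def)
    finally show ?thesis .
  qed
  thus ?thesis by (simp add: vec_eq_iff)
qed

lemma proj_orth: "cinner u v = 0 \<Longrightarrow> proj u ** proj v = 0"
  by (simp add: proj_mult_proj vec_eq_iff)

lemma proj_idem: "v \<noteq> 0 \<Longrightarrow> proj v ** proj v = proj v"
  using cinner_self_nz[of v] unfolding proj_mult_proj
  by (simp add: vec_eq_iff proj_def power2_eq_square)

lemma cnj_cinner_self: "cnj (cinner v v) = cinner v v"
  by (simp add: cinner_self)

lemma proj_herm: "proj v $ i $ j = cnj (proj v $ j $ i)"
  by (simp add: proj_def cnj_cinner_self)

definition tr :: "'d::finite cmat \<Rightarrow> complex" where
  "tr A = (\<Sum>i\<in>UNIV. A$i$i)"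

lemma tr_proj: "v \<noteq> 0 \<Longrightarrow> tr (proj v) = 1"
  using cinner_self_nz[of v]
  by (simp add: tr_def proj_def cinner_def sum_divide_distrib[symmetric] mult.commute)

lemma tr_diff: "tr (A - B) = tr A - tr B"
  by (simp add: tr_def sum_subtractf)

lemma tr_mat1: "tr (mat 1 :: 'd::finite cmat) = of_nat CARD('d)"
  by (simp add: tr_def mat_def)

lemma tr_zero: "tr 0 = 0"
  by (simp add: tr_def)

lemma proj_nz: "v \<noteq> 0 \<Longrightarrow> proj v \<noteq> 0"
  by (metis tr_proj tr_zero zero_neq_one)

lemma matrix_sub_ldistrib: "(A::'a::comm_ring_1^'n^'m) ** (B - C) = A ** B - A ** C"
  by (vector matrix_matrix_mult_def sum_subtractf[symmetric] field_simps)
lemma matrix_sub_rdistrib: "((A::'a::comm_ring_1^'n^'m) - B) ** C = A ** C - B ** C"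
  by (vector matrix_matrix_mult_def sum_subtractf[symmetric] field_simps)

lemma born_diff: "born x (A - B) = born x A - born x B"
  by (simp add: born_def matrix_vector_mult_def cinner_def vec_eq_iff
      sum_subtractf left_diff_distrib right_diff_distrib)

lemma born_mat1: "pure_state x \<Longrightarrow> born x (mat 1) = 1"
  by (simp add: born_def pure_state_def)

lemma born_proj: "born x (proj v) = (cmod (cinner v x))^2 / nv v"
proof -
  have "born x (proj v) = Re (cinner v x / cinner v v * cinner x v)"
    by (simp add: born_def proj_mult_vec cinner_scale_right)
  also have "cinner x v = cnj (cinner v x)" by (simp add: cinner_cnj)
  also have "cinner v x / cinner v v * cnj (cinner v x) = of_real ((cmod (cinner v x))^2 / nv v)"
    by (simp add: cinner_self complex_norm_square del: of_real_power)
  finally show ?thesis by simp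
qed

lemma mat1_herm: "(mat 1 :: 'd::finite cmat) $ i $ j = cnj ((mat 1 :: 'd cmat) $ j $ i)"
  by (simp add: mat_def)

lemma is_projector_proj: "v \<noteq> 0 \<Longrightarrow> is_projector (proj v)"
  using proj_herm proj_idem unfolding is_projector_def by blast

lemma antidist_meas:
  fixes v v' :: "'d::finite cvec"
  assumes N3: "CARD('d) \<ge> 3" and v: "v \<noteq> 0" and v': "v' \<noteq> 0" and o: "cinner v v' = 0"
  shows "proj_measurement {proj v, proj v', mat 1 - proj v - proj v'}"
proof -
  define P where "P = proj v"
  define P' where "P' = proj v'"
  define Q where "Q = mat 1 - P - P'"
  have o': "cinner v' v = 0" using o cinner_cnj[of v v'] by simp
  have PP: "P ** P = P" and P'P': "P' ** P' = P'" using v v' by (auto simp: P_def P'_def proj_idem)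
  have PP': "P ** P' = 0" and P'P: "P' ** P = 0" using o o' by (auto simp: P_def P'_def proj_orth)
  have PQ: "P ** Q = 0" by (simp add: Q_def matrix_sub_ldistrib PP PP')
  have QP: "Q ** P = 0" by (simp add: Q_def matrix_sub_rdistrib PP P'P)
  have P'Q: "P' ** Q = 0" by (simp add: Q_def matrix_sub_ldistrib P'P' P'P)
  have QP': "Q ** P' = 0" by (simp add: Q_def matrix_sub_rdistrib P'P' PP')
  have QQ: "Q ** Q = Q"
    by (simp add: Q_def matrix_sub_ldistrib matrix_sub_rdistrib PP P'P' PP' P'P)
  have Pnz: "P \<noteq> 0" and P'nz: "P' \<noteq> 0" using v v' by (auto simp: P_def P'_def proj_nz)
  have trQ: "tr Q = of_nat CARD('d) - 2"
    using v v' by (simp add: Q_def tr_diff tr_mat1 P_def P'_def tr_proj)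
  have ne: "(of_nat CARD('d) :: complex) - 2 \<noteq> 0"
  proof
    assume "(of_nat CARD('d) :: complex) - 2 = 0"
    hence "(of_nat CARD('d) :: complex) = of_nat 2" by simp
    hence "CARD('d) = 2" by (simp only: of_nat_eq_iff)
    with N3 show False by simp
  qed
  have Qnz: "Q \<noteq> 0"
  proof
    assume "Q = 0" then have "tr Q = 0" by (simp add: tr_zero)
    with trQ ne show False by simp
  qed
  have d1: "P \<noteq> P'"
  proof
    assume "P = P'" with PP PP' have "P = 0" by simp
    with Pnz show False by simp
  qed
  have d2: "P \<noteq> Q"
  proof
    assume "P = Q" with PP PQ have "P = 0" by simp
    with Pnz show False by simp
  qed
  have d3: "P' \<noteq> Q"
  proof
    assume "P' = Q" with P'P' P'Q have "P' = 0" by simp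
    with P'nz show False by simp
  qed
  have hQ: "Q $ i $ j = cnj (Q $ j $ i)" for i j
    by (simp add: Q_def P_def P'_def proj_def mat_def cnj_cinner_self mult.commute)
  have prQ: "is_projector Q" unfolding is_projector_def using hQ QQ by blast
  have prP: "is_projector P" "is_projector P'" using v v' by (simp_all add: P_def P'_def is_projector_proj)
  have sum: "sum (\<lambda>X. X) {P, P', Q} = mat 1"
    using d1 d2 d3 by (simp add: Q_def)
  have "proj_measurement {P, P', Q}"
    unfolding proj_measurement_def
  proof (intro conjI)
    show "finite {P, P', Q}" by simp
    show "\<forall>X\<in>{P, P', Q}. is_projector X \<and> X \<noteq> 0" using prP prQ Pnz P'nz Qnz by simp
    show "\<forall>X\<in>{P, P', Q}. \<forall>Y\<in>{P, P', Q}. X \<noteq> Y \<longrightarrow> X ** Y = 0"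
      using PP' P'P PQ QP P'Q QP' by simp
    show "sum (\<lambda>X. X) {P, P', Q} = mat 1" by (rule sum)
  qed
  thus ?thesis by (simp add: P_def P'_def Q_def)
qed



lemma model_mu:
  assumes "onto_model_reproducing M mu xi" "pure_state psi"
  shows "mu psi \<in> borel_measurable M" "\<And>x. x \<in> space M \<Longrightarrow> 0 \<le> mu psi x"
    "integrable M (mu psi)" "integral\<^sup>L M (mu psi) = 1"
  using assms unfolding onto_model_reproducing_def by blast+

lemma model_xi:
  assumes "onto_model_reproducing M mu xi" "proj_measurement Ms" "f \<in> Ms"
  shows "xi Ms f \<in> borel_measurable M" "\<And>x. x \<in> space M \<Longrightarrow> 0 \<le> xi Ms f x"
    "\<And>x. x \<in> space M \<Longrightarrow> (\<Sum>g\<in>Ms. xi Ms g x) = 1"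
    "\<And>psi. pure_state psi \<Longrightarrow> integral\<^sup>L M (\<lambda>x. xi Ms f x * mu psi x) = born psi f"
  using assms unfolding onto_model_reproducing_def by blast+

lemma mat1_nz: "(mat 1 :: 'd::finite cmat) \<noteq> 0"
proof
  assume "mat 1 = (0::'d cmat)"
  hence "(mat 1 :: 'd cmat) $ undefined $ undefined = 0" by simp
  thus False by (simp add: mat_def)
qed

lemma Ms_ne: "proj_measurement Ms \<Longrightarrow> Ms \<noteq> {}"
  using mat1_nz unfolding proj_measurement_def by auto

lemma xi_le1:
  assumes m: "onto_model_reproducing M mu xi" and Ms: "proj_measurement Ms" and f: "f \<in> Ms"
    and x: "x \<in> space M"
  shows "xi Ms f x \<le> 1"
proof -
  have fin: "finite Ms" using Ms by (simp add: proj_measurement_def)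
  have "xi Ms f x \<le> (\<Sum>g\<in>Ms. xi Ms g x)"
    by (rule member_le_sum) (use fin f x model_xi[OF m Ms] in auto)
  thus ?thesis using model_xi(3)[OF m Ms f x] by simp
qed

lemma zero_outcome:
  assumes m: "onto_model_reproducing M mu xi" and Ms: "proj_measurement Ms" and f: "f \<in> Ms"
    and z: "pure_state z" and b: "born z f = 0"
  shows "AE x in M. xi Ms f x * mu z x = 0"
proof -
  have int: "integrable M (\<lambda>x. xi Ms f x * mu z x)"
  proof (rule Bochner_Integration.integrable_bound[OF model_mu(3)[OF m z]])
    show "(\<lambda>x. xi Ms f x * mu z x) \<in> borel_measurable M"
      using model_xi(1)[OF m Ms f] model_mu(1)[OF m z] by measurable
    show "AE x in M. norm (xi Ms f x * mu z x) \<le> norm (mu z x)"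
    proof (rule AE_I2)
      fix x assume x: "x \<in> space M"
      have a: "0 \<le> xi Ms f x" "xi Ms f x \<le> 1" "0 \<le> mu z x"
        using model_xi(2)[OF m Ms f x] xi_le1[OF m Ms f x] model_mu(2)[OF m z x] by auto
      hence "xi Ms f x * mu z x \<le> mu z x" by (simp add: mult_left_le_one_le)
      thus "norm (xi Ms f x * mu z x) \<le> norm (mu z x)" using a by simp
    qed
  qed
  have nn: "AE x in M. 0 \<le> xi Ms f x * mu z x"
    using model_xi(2)[OF m Ms f] model_mu(2)[OF m z] by (auto intro!: AE_I2)
  have "integral\<^sup>L M (\<lambda>x. xi Ms f x * mu z x) = 0"
    using model_xi(4)[OF m Ms f z] b by simp
  thus ?thesis using integral_nonneg_eq_0_iff_AE[OF int nn] by simp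
qed

lemma triple_AE:
  assumes m: "onto_model_reproducing M mu xi" and Ms: "proj_measurement Ms"
    and p: "pure_state a" "pure_state b" "pure_state c"
    and cov: "\<And>f. f \<in> Ms \<Longrightarrow> born a f = 0 \<or> born b f = 0 \<or> born c f = 0"
  shows "AE x in M. min (mu a x) (min (mu b x) (mu c x)) = 0"
proof -
  define mm where "mm x = min (mu a x) (min (mu b x) (mu c x))" for x
  have fin: "finite Ms" using Ms by (simp add: proj_measurement_def)
  have each: "AE x in M. xi Ms f x * mm x = 0" if f: "f \<in> Ms" for f
  proof -
    obtain z where z: "pure_state z" "born z f = 0" "\<And>x. mm x \<le> mu z x"
      using cov[OF f] p unfolding mm_def by (metis min.cobounded1 min.cobounded2 order_trans)
    show ?thesis
      using zero_outcome[OF m Ms f z(1,2)]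
    proof (rule AE_mp, intro AE_I2 impI)
      fix x assume x: "x \<in> space M" and e: "xi Ms f x * mu z x = 0"
      have "0 \<le> mm x" using x model_mu(2)[OF m] p unfolding mm_def by simp
      moreover have "0 \<le> xi Ms f x" using model_xi(2)[OF m Ms f x] .
      ultimately have "0 \<le> xi Ms f x * mm x" by simp
      moreover have "xi Ms f x * mm x \<le> xi Ms f x * mu z x"
        using z(3) model_xi(2)[OF m Ms f x] by (simp add: mult_left_mono)
      ultimately show "xi Ms f x * mm x = 0" using e by simp
    qed
  qed
  have "AE x in M. \<forall>f\<in>Ms. xi Ms f x * mm x = 0"
    by (rule AE_finite_allI[OF fin]) (rule each)
  then have "AE x in M. mm x = 0"
  proof (rule AE_mp, intro AE_I2 impI)
    fix x assume x: "x \<in> space M" and h: "\<forall>f\<in>Ms. xi Ms f x * mm x = 0"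
    obtain f0 where f0: "f0 \<in> Ms" using Ms_ne[OF Ms] by blast
    have "mm x = (\<Sum>f\<in>Ms. xi Ms f x) * mm x" using model_xi(3)[OF m Ms f0 x] by simp
    also have "\<dots> = (\<Sum>f\<in>Ms. xi Ms f x * mm x)" by (simp add: sum_distrib_right)
    also have "\<dots> = 0" using h by (intro sum.neutral) blast
    finally show "mm x = 0" .
  qed
  thus ?thesis by (simp add: mm_def)
qed



lemma cinner_zero_left: "cinner 0 y = 0"
  by (simp add: cinner_def)

lemma key_alg0:
  fixes A C X Y :: real
  assumes "X > 0" "Y > 0" "A * Y + C * X = X * Y"
  shows "1 - A / X - C / Y = 0"
proof -
  have "A / X + C / Y = (A * Y + C * X) / (X * Y)" using assms by (simp add: field_simps)
  also have "\<dots> = 1" using assms by simp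
  finally show ?thesis by simp
qed

lemma key_alg:
  fixes A B C E W :: real
  assumes "A > 0" "C > 0" "W > 0" "B \<ge> 0" "E \<ge> 0" "A * C * W^2 = B * E"
  shows "1 - A / (A + B / W) - C / (C + E / W) = 0"
proof -
  have p1: "A + B / W > 0" using assms by (simp add: add_pos_nonneg)
  have p2: "C + E / W > 0" using assms by (simp add: add_pos_nonneg)
  have "A * (C + E / W) + C * (A + B / W) = (A + B / W) * (C + E / W)"
  proof -
    have "B / W * (E / W) = A * C" using assms by (simp add: field_simps power2_eq_square)
    thus ?thesis by (simp add: algebra_simps)
  qed
  thus ?thesis using p1 p2 key_alg0 by blast
qed

lemma crit_AE:
  fixes psi phi phi' w :: "'d::finite cvec"
  assumes m: "onto_model_reproducing M mu xi" and N3: "CARD('d) \<ge> 3"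
    and p: "pure_state psi" "pure_state phi" "pure_state phi'"
    and w: "w \<noteq> 0" and pw: "cinner psi w = 0"
    and a0: "cinner psi phi \<noteq> 0" and c0: "cinner psi phi' \<noteq> 0"
    and crit: "cinner phi psi * cinner psi phi' * cinner w w + cinner phi w * cinner w phi' = 0"
  shows "AE x in M. min (mu psi x) (min (mu phi x) (mu phi' x)) = 0"
proof -
  define W where "W = nv w"
  have W: "W > 0" using nv_pos[OF w] by (simp add: W_def)
  have nw: "cinner w w = of_real W" by (simp add: W_def cinner_self)
  have pp: "cinner psi psi = 1" using p(1) by (simp add: pure_state_def)
  have wp: "cinner w psi = 0" using pw cinner_cnj[of psi w] by simp
  define a where "a = cinner psi phi"
  define b where "b = cinner w phi"
  define c where "c = cinner psi phi'"
  define e where "e = cinner w phi'"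
  have ca: "cinner phi psi = cnj a" and cb: "cinner phi w = cnj b"
    and cc: "cinner phi' psi = cnj c" and ce: "cinner phi' w = cnj e"
    by (simp_all add: a_def b_def c_def e_def cinner_cnj)
  have crit': "cnj a * c * of_real W + cnj b * e = 0"
    using crit by (simp add: ca cb nw c_def e_def)
  define v where "v = a *s psi + (b / of_real W) *s w"
  define v' where "v' = c *s psi + (e / of_real W) *s w"
  have civ: "cinner v y = cnj a * cinner psi y + cnj b / of_real W * cinner w y" for y
    by (simp add: v_def cinner_add_left cinner_scale_left)
  have civ': "cinner v' y = cnj c * cinner psi y + cnj e / of_real W * cinner w y" for y
    by (simp add: v'_def cinner_add_left cinner_scale_left)
  have vphi': "cinner v phi' = 0"
  proof -
    have "cinner v phi' = (cnj a * c * of_real W + cnj b * e) / of_real W"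
      using W by (simp add: civ c_def[symmetric] e_def[symmetric] field_simps)
    thus ?thesis using crit' by simp
  qed
  have v'phi: "cinner v' phi = 0"
  proof -
    have "cinner v' phi = cnj (cnj a * c * of_real W + cnj b * e) / of_real W"
      using W by (simp add: civ' a_def[symmetric] b_def[symmetric] field_simps)
    thus ?thesis using crit' by simp
  qed
  have vpsi: "cinner v psi = cnj a" by (simp add: civ pp wp)
  have v'psi: "cinner v' psi = cnj c" by (simp add: civ' pp wp)
  have vv': "cinner v v' = 0"
  proof -
    have "cinner psi v' = c" by (simp add: v'_def cinner_add_right cinner_scale_right pp pw)
    moreover have "cinner w v' = e" using W
      by (simp add: v'_def cinner_add_right cinner_scale_right wp nw)
    ultimately have "cinner v v' = cnj a * c + cnj b / of_real W * e" by (simp add: civ)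
    also have "\<dots> = (cnj a * c * of_real W + cnj b * e) / of_real W"
      using W by (simp add: field_simps)
    finally show ?thesis using crit' by simp
  qed
  have vnz: "v \<noteq> 0" using vpsi a0 a_def cinner_zero_left by (metis complex_cnj_zero_iff)
  have v'nz: "v' \<noteq> 0" using v'psi c0 c_def cinner_zero_left by (metis complex_cnj_zero_iff)
  have nvv: "nv v = (cmod a)^2 + (cmod b)^2 / W" (is "nv ?V = ?R")
  proof -
    have "cinner psi v = a" by (simp add: v_def cinner_add_right cinner_scale_right pp pw)
    moreover have "cinner w v = b" using W
      by (simp add: v_def cinner_add_right cinner_scale_right wp nw)
    ultimately have "cinner v v = cnj a * a + cnj b / of_real W * b" by (simp add: civ)
    also have "\<dots> = of_real ((cmod a)^2 + (cmod b)^2 / W)"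
      by (simp add: complex_norm_square mult.commute del: of_real_power)
    finally have "complex_of_real (nv ?V) = complex_of_real ?R" by (simp only: cinner_self)
    thus ?thesis by (simp only: of_real_eq_iff)
  qed
  have nvv': "nv v' = (cmod c)^2 + (cmod e)^2 / W" (is "nv ?V = ?R")
  proof -
    have "cinner psi v' = c" by (simp add: v'_def cinner_add_right cinner_scale_right pp pw)
    moreover have "cinner w v' = e" using W
      by (simp add: v'_def cinner_add_right cinner_scale_right wp nw)
    ultimately have "cinner v' v' = cnj c * c + cnj e / of_real W * e" by (simp add: civ')
    also have "\<dots> = of_real ((cmod c)^2 + (cmod e)^2 / W)"
      by (simp add: complex_norm_square mult.commute del: of_real_power)
    finally have "complex_of_real (nv ?V) = complex_of_real ?R" by (simp only: cinner_self)
    thus ?thesis by (simp only: of_real_eq_iff)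
  qed
  have mod: "(cmod a)^2 * (cmod c)^2 * W^2 = (cmod b)^2 * (cmod e)^2"
  proof -
    have "cnj a * c * of_real W = - (cnj b * e)" using crit' by (simp add: eq_neg_iff_add_eq_0)
    hence "cmod (cnj a * c * of_real W) = cmod (cnj b * e)" by (metis norm_minus_cancel)
    hence "cmod a * cmod c * W = cmod b * cmod e" using W by (simp add: norm_mult)
    hence "(cmod a * cmod c * W)^2 = (cmod b * cmod e)^2" by simp
    thus ?thesis by (simp add: power_mult_distrib)
  qed
  have bQ: "born psi (mat 1 - proj v - proj v') = 0"
  proof -
    have "born psi (mat 1 - proj v - proj v') =
          1 - (cmod a)^2 / ((cmod a)^2 + (cmod b)^2 / W) - (cmod c)^2 / ((cmod c)^2 + (cmod e)^2 / W)"
      by (simp add: born_diff born_mat1[OF p(1)] born_proj vpsi v'psi nvv nvv')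
    also have "\<dots> = 0"
      by (rule key_alg) (use a0 c0 W mod in \<open>auto simp: a_def c_def\<close>)
    finally show ?thesis .
  qed
  have Ms: "proj_measurement {proj v, proj v', mat 1 - proj v - proj v'}"
    by (rule antidist_meas[OF N3 vnz v'nz vv'])
  show ?thesis
  proof (rule triple_AE[OF m Ms p])
    fix f assume "f \<in> {proj v, proj v', mat 1 - proj v - proj v'}"
    thus "born psi f = 0 \<or> born phi f = 0 \<or> born phi' f = 0"
      using bQ by (auto simp: born_proj vphi' v'phi)
  qed
qed



lemma sum_min_le:
  fixes a :: real and b :: "'i \<Rightarrow> real"
  assumes fin: "finite S" and a: "a \<ge> 0" and b: "\<And>i. i \<in> S \<Longrightarrow> b i \<ge> 0"
    and z: "\<And>i j. i \<in> S \<Longrightarrow> j \<in> S \<Longrightarrow> i \<noteq> j \<Longrightarrow> min a (min (b i) (b j)) = 0"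
  shows "(\<Sum>i\<in>S. min a (b i)) \<le> a"
proof (cases "\<forall>i\<in>S. min a (b i) = 0")
  case True
  hence "(\<Sum>i\<in>S. min a (b i)) = 0" by simp
  thus ?thesis using a by simp
next
  case False
  then obtain i0 where i0: "i0 \<in> S" "min a (b i0) \<noteq> 0" by blast
  have pos: "a > 0" "b i0 > 0" using i0 a b[OF i0(1)] by (auto simp: min_def split: if_splits)
  have others: "min a (b j) = 0" if "j \<in> S - {i0}" for j
  proof -
    have "min a (min (b i0) (b j)) = 0" using z[OF i0(1), of j] that by auto
    hence "b j = 0" using pos b[of j] that by (auto simp: min_def split: if_splits)
    thus ?thesis using a by simp
  qed
  have "(\<Sum>i\<in>S. min a (b i)) = min a (b i0) + (\<Sum>i\<in>S - {i0}. min a (b i))"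
    using fin i0(1) by (simp add: sum.remove)
  also have "(\<Sum>i\<in>S - {i0}. min a (b i)) = 0" using others by simp
  finally show ?thesis by simp
qed

definition crit :: "'d::finite cvec \<Rightarrow> 'd cvec \<Rightarrow> 'd cvec \<Rightarrow> 'd cvec \<Rightarrow> bool" where
  "crit psi phi phi' w \<longleftrightarrow> w \<noteq> 0 \<and> cinner psi w = 0 \<and>
     cinner phi psi * cinner psi phi' * cinner w w + cinner phi w * cinner w phi' = 0"

lemma family_bound:
  fixes psi :: "'d::finite cvec" and phi :: "'i \<Rightarrow> 'd cvec"
    and M :: "'l measure" and mu :: "'d cvec \<Rightarrow> 'l \<Rightarrow> real" and k :: real
  assumes m: "onto_model_reproducing M mu xi" and N3: "CARD('d) \<ge> 3"
    and fin: "finite S" and p: "pure_state psi"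
    and ph: "\<And>i. i \<in> S \<Longrightarrow> pure_state (phi i)"
    and nz: "\<And>i. i \<in> S \<Longrightarrow> cinner psi (phi i) \<noteq> 0"
    and pairs: "\<And>i j. i \<in> S \<Longrightarrow> j \<in> S \<Longrightarrow> i \<noteq> j \<Longrightarrow> \<exists>w. crit psi (phi i) (phi j) w"
    and bound: "\<And>psi phi. pure_state psi \<Longrightarrow> pure_state phi \<Longrightarrow>
                  omega_C M (mu psi) (mu phi) \<ge> k * omega_Q psi phi"
  shows "k * (\<Sum>i\<in>S. omega_Q psi (phi i)) \<le> 1"
proof -
  have pairAE: "AE x in M. min (mu psi x) (min (mu (phi i) x) (mu (phi j) x)) = 0"
    if ij: "i \<in> S" "j \<in> S" "i \<noteq> j" for i j
  proof -
    obtain w where w: "crit psi (phi i) (phi j) w" using pairs[OF ij] by blast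
    show ?thesis
      by (rule crit_AE[OF m N3 p ph[OF ij(1)] ph[OF ij(2)]])
         (use w nz ij in \<open>auto simp: crit_def\<close>)
  qed
  have "AE x in M. \<forall>i\<in>S. \<forall>j\<in>S. i \<noteq> j \<longrightarrow> min (mu psi x) (min (mu (phi i) x) (mu (phi j) x)) = 0"
    by (intro AE_finite_allI[OF fin] AE_finite_allI[OF fin]) (auto intro: pairAE)
  hence ptw: "AE x in M. (\<Sum>i\<in>S. min (mu psi x) (mu (phi i) x)) \<le> mu psi x"
  proof (rule AE_mp, intro AE_I2 impI)
    fix x assume x: "x \<in> space M"
      and h: "\<forall>i\<in>S. \<forall>j\<in>S. i \<noteq> j \<longrightarrow> min (mu psi x) (min (mu (phi i) x) (mu (phi j) x)) = 0"
    show "(\<Sum>i\<in>S. min (mu psi x) (mu (phi i) x)) \<le> mu psi x"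
      by (rule sum_min_le[OF fin]) (use h x model_mu(2)[OF m p] model_mu(2)[OF m ph] in auto)
  qed
  have intmin: "integrable M (\<lambda>x. min (mu psi x) (mu (phi i) x))" if "i \<in> S" for i
  proof (rule Bochner_Integration.integrable_bound[OF model_mu(3)[OF m p]])
    show "(\<lambda>x. min (mu psi x) (mu (phi i) x)) \<in> borel_measurable M"
      using model_mu(1)[OF m p] model_mu(1)[OF m ph[OF that]] by measurable
    show "AE x in M. norm (min (mu psi x) (mu (phi i) x)) \<le> norm (mu psi x)"
      using model_mu(2)[OF m p] model_mu(2)[OF m ph[OF that]] by (auto intro!: AE_I2)
  qed
  have "(\<Sum>i\<in>S. omega_C M (mu psi) (mu (phi i))) = integral\<^sup>L M (\<lambda>x. \<Sum>i\<in>S. min (mu psi x) (mu (phi i) x))"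
    unfolding omega_C_def
    using Bochner_Integration.integral_sum[where I=S and f="\<lambda>i x. min (mu psi x) (mu (phi i) x)"] intmin by simp
  also have "\<dots> \<le> integral\<^sup>L M (mu psi)"
    by (rule integral_mono_AE[OF _ model_mu(3)[OF m p] ptw]) (use intmin in auto)
  also have "\<dots> = 1" using model_mu(4)[OF m p] .
  finally have C1: "(\<Sum>i\<in>S. omega_C M (mu psi) (mu (phi i))) \<le> 1" .
  have "k * (\<Sum>i\<in>S. omega_Q psi (phi i)) = (\<Sum>i\<in>S. k * omega_Q psi (phi i))"
    by (simp add: sum_distrib_left)
  also have "\<dots> \<le> (\<Sum>i\<in>S. omega_C M (mu psi) (mu (phi i)))"
    by (rule sum_mono) (rule bound[OF p ph])
  finally show ?thesis using C1 by simp
qed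



definition idx :: "nat \<Rightarrow> 'd::finite" where
  "idx = (SOME h. bij_betw h {..<CARD('d)} (UNIV::'d set))"

lemma idx_bij: "bij_betw (idx :: nat \<Rightarrow> 'd::finite) {..<CARD('d)} UNIV"
proof -
  obtain h where "bij_betw h {0..<CARD('d)} (UNIV::'d set)"
    using ex_bij_betw_nat_finite[of "UNIV::'d set"] by auto
  hence "bij_betw h {..<CARD('d)} (UNIV::'d set)" by (simp add: lessThan_atLeast0)
  thus ?thesis unfolding idx_def by (rule someI[where P="\<lambda>h. bij_betw h {..<CARD('d)} (UNIV::'d set)"])
qed

definition vec_of :: "(nat \<Rightarrow> complex) \<Rightarrow> 'd::finite cvec" where
  "vec_of g = (\<chi> j. g (inv_into {..<CARD('d)} idx j))"

lemma inv_idx: "n < CARD('d) \<Longrightarrow> inv_into {..<CARD('d)} (idx :: nat \<Rightarrow> 'd::finite) (idx n) = n"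
  using idx_bij[where 'd='d] by (simp add: bij_betw_def inv_into_f_f)

lemma sum_transfer:
  "(\<Sum>j\<in>UNIV. F (inv_into {..<CARD('d)} (idx :: nat \<Rightarrow> 'd::finite) j)) = (\<Sum>n<CARD('d). F n)"
proof -
  have "(\<Sum>n<CARD('d). F (inv_into {..<CARD('d)} (idx :: nat \<Rightarrow> 'd) (idx n))) =
        (\<Sum>j\<in>UNIV. F (inv_into {..<CARD('d)} (idx :: nat \<Rightarrow> 'd) j))"
    by (rule sum.reindex_bij_betw[OF idx_bij])
  moreover have "(\<Sum>n<CARD('d). F (inv_into {..<CARD('d)} (idx :: nat \<Rightarrow> 'd) (idx n))) = (\<Sum>n<CARD('d). F n)"
    by (rule sum.cong) (simp_all add: inv_idx)
  ultimately show ?thesis by simp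
qed

lemma cinner_vec_of:
  "cinner (vec_of g :: 'd::finite cvec) (vec_of h) = (\<Sum>n<CARD('d). cnj (g n) * h n)"
  unfolding cinner_def vec_of_def
  using sum_transfer[where 'd='d and F="\<lambda>n. cnj (g n) * h n"] by simp

lemma vec_of_nz: "n < CARD('d) \<Longrightarrow> g n \<noteq> 0 \<Longrightarrow> (vec_of g :: 'd::finite cvec) \<noteq> 0"
proof
  assume n: "n < CARD('d)" and g: "g n \<noteq> 0" and z: "(vec_of g :: 'd cvec) = 0"
  have "(vec_of g :: 'd cvec) $ idx n = g n" by (simp add: vec_of_def inv_idx[OF n])
  with z g show False by simp
qed

definition e0 :: "nat \<Rightarrow> complex" where "e0 n = (if n = 0 then 1 else 0)"

lemma cinner_e0: "cinner (vec_of e0 :: 'd::finite cvec) (vec_of g) = g 0"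
proof -
  have "(\<lambda>n. cnj (e0 n) * g n) = (\<lambda>n. if n = 0 then g 0 else 0)" by (auto simp: e0_def fun_eq_iff)
  hence "cinner (vec_of e0 :: 'd::finite cvec) (vec_of g) = (\<Sum>n<CARD('d). if n = 0 then g 0 else 0)"
    by (simp only: cinner_vec_of)
  thus ?thesis by simp
qed

lemma cinner_e0': "cinner (vec_of g :: 'd::finite cvec) (vec_of e0) = cnj (g 0)"
proof -
  have "(\<lambda>n. cnj (g n) * e0 n) = (\<lambda>n. if n = 0 then cnj (g 0) else 0)" by (auto simp: e0_def fun_eq_iff)
  hence "cinner (vec_of g :: 'd::finite cvec) (vec_of e0) = (\<Sum>n<CARD('d). if n = 0 then cnj (g 0) else 0)"
    by (simp only: cinner_vec_of)
  thus ?thesis by simp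
qed

lemma pure_e0: "pure_state (vec_of e0 :: 'd::finite cvec)"
  by (simp add: pure_state_def cinner_e0) (simp add: e0_def)

lemma nat_family:
  fixes M :: "'l measure" and mu :: "'d::finite cvec \<Rightarrow> 'l \<Rightarrow> real" and k :: real
    and g :: "'i \<Rightarrow> nat \<Rightarrow> complex"
  assumes m: "onto_model_reproducing M mu xi" and N3: "CARD('d) \<ge> 3"
    and bound: "\<And>psi phi. pure_state psi \<Longrightarrow> pure_state phi \<Longrightarrow>
                  omega_C M (mu psi) (mu phi) \<ge> k * omega_Q psi phi"
    and fin: "finite S"
    and gn: "\<And>i. i \<in> S \<Longrightarrow> (\<Sum>n<CARD('d). cnj (g i n) * g i n) = 1"
    and g0: "\<And>i. i \<in> S \<Longrightarrow> g i 0 \<noteq> 0"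
    and pairs: "\<And>i j. i \<in> S \<Longrightarrow> j \<in> S \<Longrightarrow> i \<noteq> j \<Longrightarrow> \<exists>h. h 0 = 0 \<and> (\<exists>n<CARD('d). h n \<noteq> 0) \<and>
        cnj (g i 0) * g j 0 * (\<Sum>n<CARD('d). cnj (h n) * h n) +
        (\<Sum>n<CARD('d). cnj (g i n) * h n) * (\<Sum>n<CARD('d). cnj (h n) * g j n) = 0"
  shows "k * (\<Sum>i\<in>S. 1 - sqrt (1 - (cmod (g i 0))^2)) \<le> 1"
proof -
  define phi where "phi i = (vec_of (g i) :: 'd cvec)" for i
  have "k * (\<Sum>i\<in>S. omega_Q (vec_of e0 :: 'd cvec) (phi i)) \<le> 1"
  proof (rule family_bound[OF m N3 fin pure_e0 _ _ _ bound])
    fix i assume i: "i \<in> S"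
    show "pure_state (phi i)" using gn[OF i] by (simp add: pure_state_def phi_def cinner_vec_of)
    show "cinner (vec_of e0) (phi i) \<noteq> 0" using g0[OF i] by (simp add: phi_def cinner_e0)
  next
    fix i j assume ij: "i \<in> S" "j \<in> S" "i \<noteq> j"
    obtain h where h: "h 0 = 0" "\<exists>n<CARD('d). h n \<noteq> 0"
      "cnj (g i 0) * g j 0 * (\<Sum>n<CARD('d). cnj (h n) * h n) +
        (\<Sum>n<CARD('d). cnj (g i n) * h n) * (\<Sum>n<CARD('d). cnj (h n) * g j n) = 0"
      using pairs[OF ij] by blast
    have "crit (vec_of e0 :: 'd cvec) (phi i) (phi j) (vec_of h)"
      unfolding crit_def
    proof (intro conjI)
      show "(vec_of h :: 'd cvec) \<noteq> 0" using h(2) vec_of_nz by blast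
      show "cinner (vec_of e0 :: 'd cvec) (vec_of h) = 0" using h(1) by (simp add: cinner_e0)
      show "cinner (phi i) (vec_of e0) * cinner (vec_of e0) (phi j) * cinner (vec_of h :: 'd cvec) (vec_of h) +
          cinner (phi i) (vec_of h) * cinner (vec_of h :: 'd cvec) (phi j) = 0"
        using h(3) unfolding phi_def cinner_e0 cinner_e0' by (simp add: cinner_vec_of)
    qed
    thus "\<exists>w. crit (vec_of e0 :: 'd cvec) (phi i) (phi j) w" by blast
  qed
  thus ?thesis by (simp add: omega_Q_def phi_def cinner_e0)
qed



definition sgn_vec :: "nat \<Rightarrow> nat set \<Rightarrow> nat \<Rightarrow> complex" where
  "sgn_vec N A n = complex_of_real ((if n \<in> A then -1 else 1) / sqrt (real N))"

lemma sgn_vec_sq: assumes "N > 0" shows "cnj (sgn_vec N A n) * sgn_vec N A n = complex_of_real (1 / real N)"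
proof -
  define r where "r = (if n \<in> A then -1 else 1) / sqrt (real N)"
  have "r * r = 1 / real N" using assms by (auto simp: r_def)
  moreover have "cnj (sgn_vec N A n) * sgn_vec N A n = complex_of_real (r * r)"
    unfolding sgn_vec_def r_def[symmetric] by (simp only: complex_cnj_complex_of_real of_real_mult)
  ultimately show ?thesis by simp
qed

lemma sign_family_bound:
  fixes M :: "'l measure" and mu :: "'d::finite cvec \<Rightarrow> 'l \<Rightarrow> real" and k :: real
  assumes m: "onto_model_reproducing M mu xi" and N3: "CARD('d) \<ge> 3"
    and bound: "\<And>psi phi. pure_state psi \<Longrightarrow> pure_state phi \<Longrightarrow>
                  omega_C M (mu psi) (mu phi) \<ge> k * omega_Q psi phi"
  shows "k * (2 ^ (CARD('d) - 1) * (1 - sqrt (1 - 1 / real CARD('d)))) \<le> 1"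
proof -
  define N where "N = CARD('d)"
  have N0: "N > 0" using N3 by (simp add: N_def)
  define S where "S = Pow {1..<N}"
  have "k * (\<Sum>A\<in>S. 1 - sqrt (1 - (cmod (sgn_vec N A 0))^2)) \<le> 1"
  proof (rule nat_family[OF m N3 bound])
    show "finite S" by (simp add: S_def)
  next
    fix A assume A: "A \<in> S"
    show "(\<Sum>n<CARD('d). cnj (sgn_vec N A n) * sgn_vec N A n) = 1"
      using N0 by (simp add: sgn_vec_sq N_def[symmetric])
    have "0 \<notin> A" using A by (auto simp: S_def)
    thus "sgn_vec N A 0 \<noteq> 0" using N0 by (simp add: sgn_vec_def)
  next
    fix A B assume AB: "A \<in> S" "B \<in> S" "A \<noteq> B"
    obtain q where q: "q \<in> A \<and> q \<notin> B \<or> q \<in> B \<and> q \<notin> A" using AB(3) by blast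
    have qr: "1 \<le> q" "q < N" using q AB(1,2) by (auto simp: S_def)
    have zA: "0 \<notin> A" and zB: "0 \<notin> B" using AB by (auto simp: S_def)
    define h where "h n = (if n = q then 1 else 0 :: complex)" for n
    have s1: "(\<Sum>n<CARD('d). cnj (h n) * h n) = 1"
    proof -
      have "(\<lambda>n. cnj (h n) * h n) = (\<lambda>n. if n = q then 1 else 0)" by (auto simp: h_def fun_eq_iff)
      hence "(\<Sum>n<CARD('d). cnj (h n) * h n) = (\<Sum>n<CARD('d). if n = q then 1 else 0)" by (simp only:)
      thus ?thesis using qr by (simp add: N_def[symmetric])
    qed
    have s2: "(\<Sum>n<CARD('d). cnj (sgn_vec N A n) * h n) = cnj (sgn_vec N A q)"
    proof -
      have "(\<lambda>n. cnj (sgn_vec N A n) * h n) = (\<lambda>n. if n = q then cnj (sgn_vec N A q) else 0)"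
        by (auto simp: h_def fun_eq_iff)
      hence "(\<Sum>n<CARD('d). cnj (sgn_vec N A n) * h n) = (\<Sum>n<CARD('d). if n = q then cnj (sgn_vec N A q) else 0)" by (simp only:)
      thus ?thesis using qr by (simp add: N_def[symmetric])
    qed
    have s3: "(\<Sum>n<CARD('d). cnj (h n) * sgn_vec N B n) = sgn_vec N B q"
    proof -
      have "(\<lambda>n. cnj (h n) * sgn_vec N B n) = (\<lambda>n. if n = q then sgn_vec N B q else 0)"
        by (auto simp: h_def fun_eq_iff)
      hence "(\<Sum>n<CARD('d). cnj (h n) * sgn_vec N B n) = (\<Sum>n<CARD('d). if n = q then sgn_vec N B q else 0)" by (simp only:)
      thus ?thesis using qr by (simp add: N_def[symmetric])
    qed
    have "cnj (sgn_vec N A 0) * sgn_vec N B 0 * 1 + cnj (sgn_vec N A q) * sgn_vec N B q = 0"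
      using q zA zB N0 by (auto simp: sgn_vec_def)
    thus "\<exists>h. h 0 = 0 \<and> (\<exists>n<CARD('d). h n \<noteq> 0) \<and>
        cnj (sgn_vec N A 0) * sgn_vec N B 0 * (\<Sum>n<CARD('d). cnj (h n) * h n) +
        (\<Sum>n<CARD('d). cnj (sgn_vec N A n) * h n) * (\<Sum>n<CARD('d). cnj (h n) * sgn_vec N B n) = 0"
      using s1 s2 s3 qr by (intro exI[of _ h]) (auto simp: h_def N_def[symmetric])
  qed
  moreover have "(cmod (sgn_vec N A 0))^2 = 1 / real N" if "A \<in> S" for A
  proof -
    have "0 \<notin> A" using that by (auto simp: S_def)
    thus ?thesis using N0 by (simp add: sgn_vec_def power_divide norm_divide)
  qed
  moreover have "card S = 2 ^ (N - 1)" by (simp add: S_def card_Pow)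
  ultimately show ?thesis by (simp add: N_def)
qed



definition of_g :: "int \<times> int \<Rightarrow> complex" where
  "of_g p = Complex (of_int (fst p)) (of_int (snd p))"

definition gadd :: "int \<times> int \<Rightarrow> int \<times> int \<Rightarrow> int \<times> int" where
  "gadd x y = (fst x + fst y, snd x + snd y)"
definition gmul :: "int \<times> int \<Rightarrow> int \<times> int \<Rightarrow> int \<times> int" where
  "gmul x y = (fst x * fst y - snd x * snd y, fst x * snd y + snd x * fst y)"
definition gcnj :: "int \<times> int \<Rightarrow> int \<times> int" where
  "gcnj x = (fst x, - snd x)"

fun ginner :: "(int \<times> int) list \<Rightarrow> (int \<times> int) list \<Rightarrow> int \<times> int" where
  "ginner (x # xs) (y # ys) = gadd (gmul (gcnj x) y) (ginner xs ys)"
| "ginner _ _ = (0, 0)"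

lemma of_g_add: "of_g (gadd x y) = of_g x + of_g y"
  by (simp add: of_g_def gadd_def complex_eq_iff)
lemma of_g_mul: "of_g (gmul x y) = of_g x * of_g y"
  by (simp add: of_g_def gmul_def complex_eq_iff)
lemma of_g_cnj: "of_g (gcnj x) = cnj (of_g x)"
  by (simp add: of_g_def gcnj_def complex_eq_iff)
lemma of_g_00: "of_g (0, 0) = 0"
  by (simp add: of_g_def complex_eq_iff)
lemma of_g_10: "of_g (1, 0) = 1"
  by (simp add: of_g_def complex_eq_iff)
lemma of_g_D0: "of_g (D, 0) = of_int D"
  by (simp add: of_g_def complex_eq_iff)
lemma of_g_eq0: "of_g z = 0 \<longleftrightarrow> z = (0, 0)"
  by (cases z) (simp add: of_g_def complex_eq_iff)

lemma ginner_sum: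
  "length xs = length ys \<Longrightarrow>
   of_g (ginner xs ys) = (\<Sum>n<length xs. cnj (of_g (xs ! n)) * of_g (ys ! n))"
proof (induction xs arbitrary: ys)
  case Nil
  thus ?case by (simp add: of_g_00)
next
  case (Cons x xs)
  then obtain y ys' where ys: "ys = y # ys'" "length xs = length ys'" by (cases ys) auto
  have "of_g (ginner (x # xs) ys) = cnj (of_g x) * of_g y + of_g (ginner xs ys')"
    by (simp add: ys of_g_add of_g_mul of_g_cnj)
  also have "of_g (ginner xs ys') = (\<Sum>n<length xs. cnj (of_g (xs ! n)) * of_g (ys' ! n))"
    using Cons.IH ys(2) by simp
  finally show ?case using ys(2) by (simp add: ys sum.lessThan_Suc_shift del: sum.lessThan_Suc)
qed

definition critG :: "(int \<times> int) list \<Rightarrow> (int \<times> int) list \<Rightarrow> (int \<times> int) list \<Rightarrow> int \<times> int" where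
  "critG G G' H = gadd (gmul (gmul (gcnj (G ! 0)) (G' ! 0)) (ginner H H)) (gmul (ginner G H) (ginner H G'))"

definition check_fam :: "nat \<Rightarrow> int \<Rightarrow> (int \<times> int) list list \<Rightarrow> (int \<times> int) list list list \<Rightarrow> bool" where
  "check_fam N D L W \<longleftrightarrow>
     list_all (\<lambda>G. length G = N \<and> G ! 0 = (1, 0) \<and> ginner G G = (D, 0)) L \<and>
     list_all (\<lambda>i. list_all (\<lambda>j. i = j \<or>
        (length (W ! i ! j) = N \<and> W ! i ! j ! 0 = (0, 0) \<and> list_ex (\<lambda>z. z \<noteq> (0, 0)) (W ! i ! j) \<and>
         critG (L ! i) (L ! j) (W ! i ! j) = (0, 0))) [0..<length L]) [0..<length L]"

lemma list_family:
  fixes M :: "'l measure" and mu :: "'d::finite cvec \<Rightarrow> 'l \<Rightarrow> real" and k :: real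
  assumes m: "onto_model_reproducing M mu xi" and N3: "CARD('d) \<ge> 3"
    and bound: "\<And>psi phi. pure_state psi \<Longrightarrow> pure_state phi \<Longrightarrow>
                  omega_C M (mu psi) (mu phi) \<ge> k * omega_Q psi phi"
    and N: "CARD('d) = N" and D: "D > 0" and chk: "check_fam N D L W"
  shows "k * (real (length L) * (1 - sqrt (1 - 1 / real_of_int D))) \<le> 1"
proof -
  define s where "s = complex_of_real (sqrt (real_of_int D))"
  have s0: "s \<noteq> 0" using D by (simp add: s_def)
  have cs: "cnj s = s" by (simp add: s_def)
  have ss: "s * s = of_int D" using D by (simp add: s_def flip: of_real_mult)
  define g where "g i n = of_g (L ! i ! n) / s" for i n
  have chk1: "\<And>i. i < length L \<Longrightarrow> length (L ! i) = N \<and> L ! i ! 0 = (1, 0) \<and> ginner (L ! i) (L ! i) = (D, 0)"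
    using chk unfolding check_fam_def list_all_length by blast
  have chk2: "\<And>i j. i < length L \<Longrightarrow> j < length L \<Longrightarrow> i \<noteq> j \<Longrightarrow>
      length (W ! i ! j) = N \<and> W ! i ! j ! 0 = (0, 0) \<and> list_ex (\<lambda>z. z \<noteq> (0, 0)) (W ! i ! j) \<and>
         critG (L ! i) (L ! j) (W ! i ! j) = (0, 0)"
  proof -
    fix i j assume i: "i < length L" and j: "j < length L" and ij: "i \<noteq> j"
    have A: "\<forall>i\<in>set [0..<length L]. \<forall>j\<in>set [0..<length L]. i = j \<or>
        (length (W ! i ! j) = N \<and> W ! i ! j ! 0 = (0, 0) \<and> list_ex (\<lambda>z. z \<noteq> (0, 0)) (W ! i ! j) \<and>
         critG (L ! i) (L ! j) (W ! i ! j) = (0, 0))"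
      using chk unfolding check_fam_def list_all_iff by blast
    have "i \<in> set [0..<length L]" "j \<in> set [0..<length L]" using i j by simp_all
    with A have "i = j \<or> (length (W ! i ! j) = N \<and> W ! i ! j ! 0 = (0, 0) \<and> list_ex (\<lambda>z. z \<noteq> (0, 0)) (W ! i ! j) \<and>
         critG (L ! i) (L ! j) (W ! i ! j) = (0, 0))" by blast
    with ij show "length (W ! i ! j) = N \<and> W ! i ! j ! 0 = (0, 0) \<and> list_ex (\<lambda>z. z \<noteq> (0, 0)) (W ! i ! j) \<and>
         critG (L ! i) (L ! j) (W ! i ! j) = (0, 0)" by blast
  qed
  have sumscale: "(\<Sum>n<N. cnj (g i n) * f n) = (\<Sum>n<N. cnj (of_g (L ! i ! n)) * f n) / s" for i f
    by (simp add: g_def cs sum_divide_distrib)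
  have sumscale2: "(\<Sum>n<N. f n * g i n) = (\<Sum>n<N. f n * of_g (L ! i ! n)) / s" for i f
    by (simp add: g_def sum_divide_distrib)
  have "k * (\<Sum>i\<in>{..<length L}. 1 - sqrt (1 - (cmod (g i 0))^2)) \<le> 1"
  proof (rule nat_family[OF m N3 bound])
    show "finite {..<length L}" by simp
  next
    fix i assume "i \<in> {..<length L}"
    hence i: "i < length L" by simp
    have "(\<Sum>n<N. cnj (g i n) * g i n) = (\<Sum>n<N. cnj (of_g (L ! i ! n)) * of_g (L ! i ! n)) / s / s"
      by (simp add: sumscale sumscale2)
    also have "(\<Sum>n<N. cnj (of_g (L ! i ! n)) * of_g (L ! i ! n)) = of_int D"
      using ginner_sum[of "L ! i" "L ! i"] chk1[OF i] by (simp add: of_g_D0)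
    finally show "(\<Sum>n<CARD('d). cnj (g i n) * g i n) = 1" using ss s0 D by (simp add: N field_simps)
    show "g i 0 \<noteq> 0" using chk1[OF i] s0 by (simp add: g_def of_g_10)
  next
    fix i j assume ij: "i \<in> {..<length L}" "j \<in> {..<length L}" "i \<noteq> j"
    hence i: "i < length L" and j: "j < length L" by auto
    define H where "H = W ! i ! j"
    have c2: "length H = N" "H ! 0 = (0, 0)" "list_ex (\<lambda>z. z \<noteq> (0, 0)) H" "critG (L ! i) (L ! j) H = (0, 0)"
      using chk2[OF i j ij(3)] by (auto simp: H_def)
    define h where "h n = of_g (H ! n)" for n
    have h0: "h 0 = 0" using c2 by (simp add: h_def of_g_00)
    have hn: "\<exists>n<CARD('d). h n \<noteq> 0"
    proof -
      obtain z where z: "z \<in> set H" "z \<noteq> (0, 0)" using c2(3) by (auto simp: list_ex_iff)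
      then obtain n where n: "n < length H" "H ! n = z" by (auto simp: in_set_conv_nth)
      thus ?thesis using z c2(1) by (auto simp: h_def N of_g_eq0)
    qed
    have e1: "(\<Sum>n<N. cnj (h n) * h n) = of_g (ginner H H)"
      using ginner_sum[of H H] c2(1) by (simp add: h_def)
    have e2: "(\<Sum>n<N. cnj (g i n) * h n) = of_g (ginner (L ! i) H) / s"
      using ginner_sum[of "L ! i" H] c2(1) chk1[OF i] by (simp add: sumscale h_def)
    have e3: "(\<Sum>n<N. cnj (h n) * g j n) = of_g (ginner H (L ! j)) / s"
      using ginner_sum[of H "L ! j"] c2(1) chk1[OF j] by (simp add: sumscale2 h_def)
    have "cnj (g i 0) * g j 0 * (\<Sum>n<N. cnj (h n) * h n) +
        (\<Sum>n<N. cnj (g i n) * h n) * (\<Sum>n<N. cnj (h n) * g j n) =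
        cnj (g i 0) * g j 0 * of_g (ginner H H) + of_g (ginner (L ! i) H) / s * (of_g (ginner H (L ! j)) / s)"
      by (simp only: e1 e2 e3)
    also have "\<dots> = of_g (critG (L ! i) (L ! j) H) / (s * s)"
      using s0 by (simp add: g_def cs critG_def of_g_add of_g_mul of_g_cnj field_simps)
    also have "\<dots> = 0" using c2(4) by (simp add: of_g_00)
    finally show "\<exists>h. h 0 = 0 \<and> (\<exists>n<CARD('d). h n \<noteq> 0) \<and>
        cnj (g i 0) * g j 0 * (\<Sum>n<CARD('d). cnj (h n) * h n) +
        (\<Sum>n<CARD('d). cnj (g i n) * h n) * (\<Sum>n<CARD('d). cnj (h n) * g j n) = 0"
      using h0 hn unfolding N by blast
  qed
  moreover have "(cmod (g i 0))^2 = 1 / real_of_int D" if "i \<in> {..<length L}" for i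
    using chk1[of i] that D by (simp add: g_def of_g_10 s_def norm_divide power_divide)
  ultimately show ?thesis by simp
qed



lemma kb:
  fixes k X c :: real
  assumes c: "c > 0" and X: "X > c" and kX: "k * X \<le> 1"
  shows "k < 1 / c"
proof (cases "k \<le> 0")
  case True
  thus ?thesis using c by (smt (verit) divide_pos_pos)
next
  case False
  hence "k * c < k * X" using X by simp
  hence "k * c < 1" using kX by simp
  thus ?thesis using c by (simp add: pos_less_divide_eq)
qed

lemma sqrt_bound: assumes "0 \<le> x" "x \<le> 1" shows "1 - sqrt (1 - x) \<ge> x / 2"
proof -
  have "sqrt (1 - x) \<le> sqrt ((1 - x / 2)^2)"
    by (rule real_sqrt_le_mono) (simp add: power2_eq_square algebra_simps)
  also have "\<dots> = 1 - x / 2" using assms by simp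
  finally show ?thesis by simp
qed

lemma pow_ineq1: "4 \<le> n \<Longrightarrow> n * (n - 1) < (2::nat) ^ n"
proof (induction n rule: nat_induct_at_least)
  case base thus ?case by simp
next
  case (Suc n)
  have "Suc n * (Suc n - 1) = n * n + n" by simp
  also have "\<dots> \<le> 2 * (n * (n - 1))"
  proof -
    have a: "4 * n \<le> n * n" using Suc.hyps mult_le_mono1[of 4 n n] by simp
    have b: "n * (n - 1) = n * n - n" by (simp add: diff_mult_distrib2)
    show ?thesis unfolding b using a by linarith
  qed
  also have "\<dots> < 2 * 2 ^ n" using Suc.IH by simp
  finally show ?case by simp
qed

lemma pow_ineq2: "7 \<le> n \<Longrightarrow> 2 * n ^ 2 < (2::nat) ^ n"
proof (induction n rule: nat_induct_at_least)
  case base thus ?case by simp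
next
  case (Suc n)
  have "2 * Suc n ^ 2 = 2 * n ^ 2 + 4 * n + 2" by (simp add: power2_eq_square algebra_simps)
  also have "\<dots> \<le> 2 * (2 * n ^ 2)"
  proof -
    have a: "7 * n \<le> n * n" using Suc.hyps mult_le_mono1[of 7 n n] by simp
    have b: "n ^ 2 = n * n" by (simp add: power2_eq_square)
    show ?thesis unfolding b using a Suc.hyps by linarith
  qed
  also have "\<dots> < 2 * 2 ^ n" using Suc.IH by simp
  finally show ?case by simp
qed

lemma not_pp6: "\<not> primepow (6::nat)"
proof
  assume "primepow (6::nat)"
  then obtain p k where pk: "prime p" "k > 0" "(6::nat) = p ^ k" unfolding primepow_def by auto
  have "(2::nat) dvd p ^ k" by (simp add: pk(3)[symmetric])
  hence "2 dvd p" using prime_dvd_power[of "2::nat" p k] by simp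
  hence p2: "p = 2" using pk(1) unfolding prime_nat_iff by auto
  have "(3::nat) dvd p ^ k" by (simp add: pk(3)[symmetric])
  hence "3 dvd p" using prime_dvd_power[of "3::nat" p k] by simp
  thus False using p2 by simp
qed


definition L4 :: "(int \<times> int) list list" where
  "L4 = [[(1, 0), (1, 0), (1, 0), (1, 0)],
    [(1, 0), (1, 0), (0, 1), (0, -1)],
    [(1, 0), (1, 0), (-1, 0), (-1, 0)],
    [(1, 0), (1, 0), (0, -1), (0, 1)],
    [(1, 0), (0, 1), (1, 0), (0, -1)],
    [(1, 0), (0, 1), (0, 1), (-1, 0)],
    [(1, 0), (0, 1), (-1, 0), (0, 1)],
    [(1, 0), (0, 1), (0, -1), (1, 0)],
    [(1, 0), (-1, 0), (1, 0), (-1, 0)],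
    [(1, 0), (-1, 0), (0, 1), (0, 1)],
    [(1, 0), (-1, 0), (-1, 0), (1, 0)],
    [(1, 0), (-1, 0), (0, -1), (0, -1)],
    [(1, 0), (0, -1), (1, 0), (0, 1)],
    [(1, 0), (0, -1), (0, 1), (1, 0)],
    [(1, 0), (0, -1), (-1, 0), (0, -1)],
    [(1, 0), (0, -1), (0, -1), (-1, 0)]]"

definition W4 :: "(int \<times> int) list list list" where
  "W4 = [[[(0, 0), (0, 0), (0, 0), (0, 0)], [(0, 0), (0, 0), (1, 0), (0, 1)], [(0, 0), (0, 0), (0, 0), (1, 0)], [(0, 0), (0, 0), (1, 0), (0, -1)], [(0, 0), (1, 0), (0, 0), (0, 1)], [(0, 0), (0, 0), (0, 0), (1, 0)], [(0, 0), (0, 0), (1, 0), (0, 0)], [(0, 0), (1, 0), (0, 1), (0, 0)], [(0, 0), (0, 0), (0, 0), (1, 0)], [(0, 0), (1, 0), (0, 0), (0, 0)], [(0, 0), (0, 0), (1, 0), (0, 0)], [(0, 0), (1, 0), (0, 0), (0, 0)], [(0, 0), (1, 0), (0, 0), (0, -1)], [(0, 0), (1, 0), (0, -1), (0, 0)], [(0, 0), (0, 0), (1, 0), (0, 0)], [(0, 0), (0, 0), (0, 0), (1, 0)]],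
    [[(0, 0), (0, 0), (1, 0), (0, 1)], [(0, 0), (0, 0), (0, 0), (0, 0)], [(0, 0), (0, 0), (1, 0), (0, -1)], [(0, 0), (0, 0), (0, 0), (1, 0)], [(0, 0), (1, 0), (-1, 0), (0, 0)], [(0, 0), (1, 0), (0, 0), (1, 0)], [(0, 0), (0, 0), (0, 0), (1, 0)], [(0, 0), (0, 0), (1, 0), (0, 0)], [(0, 0), (1, 0), (0, 0), (0, 0)], [(0, 0), (0, 0), (0, 0), (1, 0)], [(0, 0), (1, 0), (0, 0), (0, 0)], [(0, 0), (0, 0), (1, 0), (0, 0)], [(0, 0), (0, 0), (0, 0), (1, 0)], [(0, 0), (1, 0), (0, 0), (-1, 0)], [(0, 0), (1, 0), (1, 0), (0, 0)], [(0, 0), (0, 0), (1, 0), (0, 0)]],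
    [[(0, 0), (0, 0), (0, 0), (1, 0)], [(0, 0), (0, 0), (1, 0), (0, -1)], [(0, 0), (0, 0), (0, 0), (0, 0)], [(0, 0), (0, 0), (1, 0), (0, 1)], [(0, 0), (0, 0), (1, 0), (0, 0)], [(0, 0), (1, 0), (0, -1), (0, 0)], [(0, 0), (1, 0), (0, 0), (0, -1)], [(0, 0), (0, 0), (0, 0), (1, 0)], [(0, 0), (0, 0), (1, 0), (0, 0)], [(0, 0), (1, 0), (0, 0), (0, 0)], [(0, 0), (0, 0), (0, 0), (1, 0)], [(0, 0), (1, 0), (0, 0), (0, 0)], [(0, 0), (0, 0), (1, 0), (0, 0)], [(0, 0), (0, 0), (0, 0), (1, 0)], [(0, 0), (1, 0), (0, 0), (0, 1)], [(0, 0), (1, 0), (0, 1), (0, 0)]],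
    [[(0, 0), (0, 0), (1, 0), (0, -1)], [(0, 0), (0, 0), (0, 0), (1, 0)], [(0, 0), (0, 0), (1, 0), (0, 1)], [(0, 0), (0, 0), (0, 0), (0, 0)], [(0, 0), (0, 0), (0, 0), (1, 0)], [(0, 0), (0, 0), (1, 0), (0, 0)], [(0, 0), (1, 0), (1, 0), (0, 0)], [(0, 0), (1, 0), (0, 0), (-1, 0)], [(0, 0), (1, 0), (0, 0), (0, 0)], [(0, 0), (0, 0), (1, 0), (0, 0)], [(0, 0), (1, 0), (0, 0), (0, 0)], [(0, 0), (0, 0), (0, 0), (1, 0)], [(0, 0), (1, 0), (-1, 0), (0, 0)], [(0, 0), (0, 0), (1, 0), (0, 0)], [(0, 0), (0, 0), (0, 0), (1, 0)], [(0, 0), (1, 0), (0, 0), (1, 0)]],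
    [[(0, 0), (1, 0), (0, 0), (0, 1)], [(0, 0), (1, 0), (-1, 0), (0, 0)], [(0, 0), (0, 0), (1, 0), (0, 0)], [(0, 0), (0, 0), (0, 0), (1, 0)], [(0, 0), (0, 0), (0, 0), (0, 0)], [(0, 0), (0, 0), (1, 0), (1, 0)], [(0, 0), (0, 0), (0, 0), (1, 0)], [(0, 0), (0, 0), (1, 0), (-1, 0)], [(0, 0), (1, 0), (0, 0), (0, -1)], [(0, 0), (0, 0), (0, 0), (1, 0)], [(0, 0), (0, 0), (1, 0), (0, 0)], [(0, 0), (1, 0), (1, 0), (0, 0)], [(0, 0), (0, 0), (0, 0), (1, 0)], [(0, 0), (1, 0), (0, 0), (0, 0)], [(0, 0), (0, 0), (1, 0), (0, 0)], [(0, 0), (1, 0), (0, 0), (0, 0)]],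
    [[(0, 0), (0, 0), (0, 0), (1, 0)], [(0, 0), (1, 0), (0, 0), (1, 0)], [(0, 0), (1, 0), (0, -1), (0, 0)], [(0, 0), (0, 0), (1, 0), (0, 0)], [(0, 0), (0, 0), (1, 0), (1, 0)], [(0, 0), (0, 0), (0, 0), (0, 0)], [(0, 0), (0, 0), (1, 0), (-1, 0)], [(0, 0), (0, 0), (0, 0), (1, 0)], [(0, 0), (1, 0), (0, 1), (0, 0)], [(0, 0), (1, 0), (0, 0), (-1, 0)], [(0, 0), (0, 0), (0, 0), (1, 0)], [(0, 0), (0, 0), (1, 0), (0, 0)], [(0, 0), (1, 0), (0, 0), (0, 0)], [(0, 0), (0, 0), (0, 0), (1, 0)], [(0, 0), (1, 0), (0, 0), (0, 0)], [(0, 0), (0, 0), (1, 0), (0, 0)]],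
    [[(0, 0), (0, 0), (1, 0), (0, 0)], [(0, 0), (0, 0), (0, 0), (1, 0)], [(0, 0), (1, 0), (0, 0), (0, -1)], [(0, 0), (1, 0), (1, 0), (0, 0)], [(0, 0), (0, 0), (0, 0), (1, 0)], [(0, 0), (0, 0), (1, 0), (-1, 0)], [(0, 0), (0, 0), (0, 0), (0, 0)], [(0, 0), (0, 0), (1, 0), (1, 0)], [(0, 0), (0, 0), (1, 0), (0, 0)], [(0, 0), (1, 0), (-1, 0), (0, 0)], [(0, 0), (1, 0), (0, 0), (0, 1)], [(0, 0), (0, 0), (0, 0), (1, 0)], [(0, 0), (0, 0), (1, 0), (0, 0)], [(0, 0), (1, 0), (0, 0), (0, 0)], [(0, 0), (0, 0), (0, 0), (1, 0)], [(0, 0), (1, 0), (0, 0), (0, 0)]],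
    [[(0, 0), (1, 0), (0, 1), (0, 0)], [(0, 0), (0, 0), (1, 0), (0, 0)], [(0, 0), (0, 0), (0, 0), (1, 0)], [(0, 0), (1, 0), (0, 0), (-1, 0)], [(0, 0), (0, 0), (1, 0), (-1, 0)], [(0, 0), (0, 0), (0, 0), (1, 0)], [(0, 0), (0, 0), (1, 0), (1, 0)], [(0, 0), (0, 0), (0, 0), (0, 0)], [(0, 0), (0, 0), (0, 0), (1, 0)], [(0, 0), (0, 0), (1, 0), (0, 0)], [(0, 0), (1, 0), (0, -1), (0, 0)], [(0, 0), (1, 0), (0, 0), (1, 0)], [(0, 0), (1, 0), (0, 0), (0, 0)], [(0, 0), (0, 0), (1, 0), (0, 0)], [(0, 0), (1, 0), (0, 0), (0, 0)], [(0, 0), (0, 0), (0, 0), (1, 0)]],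
    [[(0, 0), (0, 0), (0, 0), (1, 0)], [(0, 0), (1, 0), (0, 0), (0, 0)], [(0, 0), (0, 0), (1, 0), (0, 0)], [(0, 0), (1, 0), (0, 0), (0, 0)], [(0, 0), (1, 0), (0, 0), (0, -1)], [(0, 0), (1, 0), (0, 1), (0, 0)], [(0, 0), (0, 0), (1, 0), (0, 0)], [(0, 0), (0, 0), (0, 0), (1, 0)], [(0, 0), (0, 0), (0, 0), (0, 0)], [(0, 0), (0, 0), (1, 0), (0, -1)], [(0, 0), (0, 0), (0, 0), (1, 0)], [(0, 0), (0, 0), (1, 0), (0, 1)], [(0, 0), (1, 0), (0, 0), (0, 1)], [(0, 0), (0, 0), (0, 0), (1, 0)], [(0, 0), (0, 0), (1, 0), (0, 0)], [(0, 0), (1, 0), (0, -1), (0, 0)]],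
    [[(0, 0), (1, 0), (0, 0), (0, 0)], [(0, 0), (0, 0), (0, 0), (1, 0)], [(0, 0), (1, 0), (0, 0), (0, 0)], [(0, 0), (0, 0), (1, 0), (0, 0)], [(0, 0), (0, 0), (0, 0), (1, 0)], [(0, 0), (1, 0), (0, 0), (-1, 0)], [(0, 0), (1, 0), (-1, 0), (0, 0)], [(0, 0), (0, 0), (1, 0), (0, 0)], [(0, 0), (0, 0), (1, 0), (0, -1)], [(0, 0), (0, 0), (0, 0), (0, 0)], [(0, 0), (0, 0), (1, 0), (0, 1)], [(0, 0), (0, 0), (0, 0), (1, 0)], [(0, 0), (1, 0), (1, 0), (0, 0)], [(0, 0), (1, 0), (0, 0), (1, 0)], [(0, 0), (0, 0), (0, 0), (1, 0)], [(0, 0), (0, 0), (1, 0), (0, 0)]],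
    [[(0, 0), (0, 0), (1, 0), (0, 0)], [(0, 0), (1, 0), (0, 0), (0, 0)], [(0, 0), (0, 0), (0, 0), (1, 0)], [(0, 0), (1, 0), (0, 0), (0, 0)], [(0, 0), (0, 0), (1, 0), (0, 0)], [(0, 0), (0, 0), (0, 0), (1, 0)], [(0, 0), (1, 0), (0, 0), (0, 1)], [(0, 0), (1, 0), (0, -1), (0, 0)], [(0, 0), (0, 0), (0, 0), (1, 0)], [(0, 0), (0, 0), (1, 0), (0, 1)], [(0, 0), (0, 0), (0, 0), (0, 0)], [(0, 0), (0, 0), (1, 0), (0, -1)], [(0, 0), (0, 0), (1, 0), (0, 0)], [(0, 0), (1, 0), (0, 1), (0, 0)], [(0, 0), (1, 0), (0, 0), (0, -1)], [(0, 0), (0, 0), (0, 0), (1, 0)]],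
    [[(0, 0), (1, 0), (0, 0), (0, 0)], [(0, 0), (0, 0), (1, 0), (0, 0)], [(0, 0), (1, 0), (0, 0), (0, 0)], [(0, 0), (0, 0), (0, 0), (1, 0)], [(0, 0), (1, 0), (1, 0), (0, 0)], [(0, 0), (0, 0), (1, 0), (0, 0)], [(0, 0), (0, 0), (0, 0), (1, 0)], [(0, 0), (1, 0), (0, 0), (1, 0)], [(0, 0), (0, 0), (1, 0), (0, 1)], [(0, 0), (0, 0), (0, 0), (1, 0)], [(0, 0), (0, 0), (1, 0), (0, -1)], [(0, 0), (0, 0), (0, 0), (0, 0)], [(0, 0), (0, 0), (0, 0), (1, 0)], [(0, 0), (0, 0), (1, 0), (0, 0)], [(0, 0), (1, 0), (-1, 0), (0, 0)], [(0, 0), (1, 0), (0, 0), (-1, 0)]],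
    [[(0, 0), (1, 0), (0, 0), (0, -1)], [(0, 0), (0, 0), (0, 0), (1, 0)], [(0, 0), (0, 0), (1, 0), (0, 0)], [(0, 0), (1, 0), (-1, 0), (0, 0)], [(0, 0), (0, 0), (0, 0), (1, 0)], [(0, 0), (1, 0), (0, 0), (0, 0)], [(0, 0), (0, 0), (1, 0), (0, 0)], [(0, 0), (1, 0), (0, 0), (0, 0)], [(0, 0), (1, 0), (0, 0), (0, 1)], [(0, 0), (1, 0), (1, 0), (0, 0)], [(0, 0), (0, 0), (1, 0), (0, 0)], [(0, 0), (0, 0), (0, 0), (1, 0)], [(0, 0), (0, 0), (0, 0), (0, 0)], [(0, 0), (0, 0), (1, 0), (-1, 0)], [(0, 0), (0, 0), (0, 0), (1, 0)], [(0, 0), (0, 0), (1, 0), (1, 0)]],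
    [[(0, 0), (1, 0), (0, -1), (0, 0)], [(0, 0), (1, 0), (0, 0), (-1, 0)], [(0, 0), (0, 0), (0, 0), (1, 0)], [(0, 0), (0, 0), (1, 0), (0, 0)], [(0, 0), (1, 0), (0, 0), (0, 0)], [(0, 0), (0, 0), (0, 0), (1, 0)], [(0, 0), (1, 0), (0, 0), (0, 0)], [(0, 0), (0, 0), (1, 0), (0, 0)], [(0, 0), (0, 0), (0, 0), (1, 0)], [(0, 0), (1, 0), (0, 0), (1, 0)], [(0, 0), (1, 0), (0, 1), (0, 0)], [(0, 0), (0, 0), (1, 0), (0, 0)], [(0, 0), (0, 0), (1, 0), (-1, 0)], [(0, 0), (0, 0), (0, 0), (0, 0)], [(0, 0), (0, 0), (1, 0), (1, 0)], [(0, 0), (0, 0), (0, 0), (1, 0)]],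
    [[(0, 0), (0, 0), (1, 0), (0, 0)], [(0, 0), (1, 0), (1, 0), (0, 0)], [(0, 0), (1, 0), (0, 0), (0, 1)], [(0, 0), (0, 0), (0, 0), (1, 0)], [(0, 0), (0, 0), (1, 0), (0, 0)], [(0, 0), (1, 0), (0, 0), (0, 0)], [(0, 0), (0, 0), (0, 0), (1, 0)], [(0, 0), (1, 0), (0, 0), (0, 0)], [(0, 0), (0, 0), (1, 0), (0, 0)], [(0, 0), (0, 0), (0, 0), (1, 0)], [(0, 0), (1, 0), (0, 0), (0, -1)], [(0, 0), (1, 0), (-1, 0), (0, 0)], [(0, 0), (0, 0), (0, 0), (1, 0)], [(0, 0), (0, 0), (1, 0), (1, 0)], [(0, 0), (0, 0), (0, 0), (0, 0)], [(0, 0), (0, 0), (1, 0), (-1, 0)]],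
    [[(0, 0), (0, 0), (0, 0), (1, 0)], [(0, 0), (0, 0), (1, 0), (0, 0)], [(0, 0), (1, 0), (0, 1), (0, 0)], [(0, 0), (1, 0), (0, 0), (1, 0)], [(0, 0), (1, 0), (0, 0), (0, 0)], [(0, 0), (0, 0), (1, 0), (0, 0)], [(0, 0), (1, 0), (0, 0), (0, 0)], [(0, 0), (0, 0), (0, 0), (1, 0)], [(0, 0), (1, 0), (0, -1), (0, 0)], [(0, 0), (0, 0), (1, 0), (0, 0)], [(0, 0), (0, 0), (0, 0), (1, 0)], [(0, 0), (1, 0), (0, 0), (-1, 0)], [(0, 0), (0, 0), (1, 0), (1, 0)], [(0, 0), (0, 0), (0, 0), (1, 0)], [(0, 0), (0, 0), (1, 0), (-1, 0)], [(0, 0), (0, 0), (0, 0), (0, 0)]]]"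

definition L5 :: "(int \<times> int) list list" where
  "L5 = [[(1, 0), (1, 0), (1, 0), (1, 0), (1, 0)],
    [(1, 0), (1, 0), (1, 0), (1, 0), (-1, 0)],
    [(1, 0), (1, 0), (1, 0), (-1, 0), (1, 0)],
    [(1, 0), (1, 0), (1, 0), (-1, 0), (-1, 0)],
    [(1, 0), (1, 0), (-1, 0), (1, 0), (1, 0)],
    [(1, 0), (1, 0), (-1, 0), (0, 1), (-1, 0)],
    [(1, 0), (1, 0), (-1, 0), (-1, 0), (0, 1)],
    [(1, 0), (0, 1), (-1, 0), (1, 0), (0, -1)],
    [(1, 0), (0, 1), (-1, 0), (0, -1), (1, 0)],
    [(1, 0), (0, 1), (0, -1), (1, 0), (-1, 0)],
    [(1, 0), (0, 1), (0, -1), (-1, 0), (1, 0)],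
    [(1, 0), (0, 1), (0, -1), (0, -1), (0, -1)],
    [(1, 0), (-1, 0), (1, 0), (1, 0), (0, 1)],
    [(1, 0), (-1, 0), (1, 0), (0, 1), (1, 0)],
    [(1, 0), (-1, 0), (1, 0), (-1, 0), (-1, 0)],
    [(1, 0), (-1, 0), (0, 1), (1, 0), (0, -1)],
    [(1, 0), (-1, 0), (0, 1), (0, -1), (1, 0)],
    [(1, 0), (-1, 0), (-1, 0), (1, 0), (-1, 0)],
    [(1, 0), (-1, 0), (-1, 0), (0, 1), (0, 1)],
    [(1, 0), (-1, 0), (-1, 0), (-1, 0), (1, 0)],
    [(1, 0), (-1, 0), (-1, 0), (0, -1), (0, -1)],
    [(1, 0), (-1, 0), (0, -1), (-1, 0), (0, -1)],
    [(1, 0), (-1, 0), (0, -1), (0, -1), (-1, 0)],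
    [(1, 0), (0, -1), (-1, 0), (-1, 0), (0, -1)],
    [(1, 0), (0, -1), (-1, 0), (0, -1), (-1, 0)]]"

definition W5 :: "(int \<times> int) list list list" where
  "W5 = [[[(0, 0), (0, 0), (0, 0), (0, 0), (0, 0)], [(0, 0), (0, 0), (0, 0), (0, 0), (1, 0)], [(0, 0), (0, 0), (0, 0), (1, 0), (0, 0)], [(0, 0), (0, 0), (0, 0), (0, 0), (1, 0)], [(0, 0), (0, 0), (1, 0), (0, 0), (0, 0)], [(0, 0), (0, 0), (0, 0), (0, 0), (1, 0)], [(0, 0), (0, 0), (0, 0), (1, 0), (0, 0)], [(0, 0), (0, 0), (1, 0), (0, 0), (0, 0)], [(0, 0), (0, 0), (1, 0), (0, 0), (0, 0)], [(0, 0), (0, 0), (0, 0), (0, 0), (1, 0)], [(0, 0), (0, 0), (0, 0), (1, 0), (0, 0)], [(0, 0), (1, 0), (0, 0), (0, 0), (0, 1)], [(0, 0), (1, 0), (0, 0), (0, 0), (0, 0)], [(0, 0), (1, 0), (0, 0), (0, 0), (0, 0)], [(0, 0), (0, 0), (0, 0), (0, 0), (1, 0)], [(0, 0), (1, 0), (0, 0), (0, 0), (0, 0)], [(0, 0), (1, 0), (0, 0), (0, 0), (0, 0)], [(0, 0), (0, 0), (0, 0), (0, 0), (1, 0)], [(0, 0), (0, 0), (1, 0), (0, 0), (0, 0)], [(0, 0), (0, 0), (0, 0), (1, 0), (0, 0)], [(0, 0), (0, 0), (1, 0), (0, 0), (0, 0)], [(0, 0), (0, 0), (0, 0), (1, 0),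 (0, 0)], [(0, 0), (0, 0), (0, 0), (0, 0), (1, 0)], [(0, 0), (0, 0), (0, 0), (1, 0), (0, 0)], [(0, 0), (0, 0), (0, 0), (0, 0), (1, 0)]],
    [[(0, 0), (0, 0), (0, 0), (0, 0), (1, 0)], [(0, 0), (0, 0), (0, 0), (0, 0), (0, 0)], [(0, 0), (0, 0), (0, 0), (0, 0), (1, 0)], [(0, 0), (0, 0), (0, 0), (1, 0), (0, 0)], [(0, 0), (0, 0), (0, 0), (0, 0), (1, 0)], [(0, 0), (0, 0), (1, 0), (0, 0), (0, 0)], [(0, 0), (0, 0), (0, 0), (1, 0), (0, 0)], [(0, 0), (0, 0), (1, 0), (0, 0), (0, 0)], [(0, 0), (0, 0), (0, 0), (0, 0), (1, 0)], [(0, 0), (1, 0), (0, 1), (0, 0), (0, 0)], [(0, 0), (0, 0), (0, 0), (0, 0), (1, 0)], [(0, 0), (0, 0), (0, 0), (1, 0), (0, 1)], [(0, 0), (1, 0), (0, 0), (0, 0), (0, 0)], [(0, 0), (0, 0), (0, 0), (0, 0), (1, 0)], [(0, 0), (0, 0), (0, 0), (1, 0), (0, 0)], [(0, 0), (1, 0), (0, 0), (0, 0), (0, 0)], [(0, 0), (0, 0), (0, 0), (0, 0), (1, 0)], [(0, 0), (0, 0), (1, 0), (0, 0), (0, 0)], [(0, 0), (0, 0), (1, 0), (0, 0), (0, 0)], [(0, 0), (0, 0), (0, 0), (0, 0), (1, 0)], [(0, 0), (0, 0), (1, 0), (0, 0), (0, 0)], [(0, 0), (0, 0), (0, 0), (1,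 0), (0, 0)], [(0, 0), (1, 0), (0, 0), (0, 0), (0, 0)], [(0, 0), (0, 0), (0, 0), (1, 0), (0, 0)], [(0, 0), (0, 0), (1, 0), (0, 0), (0, 0)]],
    [[(0, 0), (0, 0), (0, 0), (1, 0), (0, 0)], [(0, 0), (0, 0), (0, 0), (0, 0), (1, 0)], [(0, 0), (0, 0), (0, 0), (0, 0), (0, 0)], [(0, 0), (0, 0), (0, 0), (0, 0), (1, 0)], [(0, 0), (0, 0), (0, 0), (1, 0), (0, 0)], [(0, 0), (0, 0), (0, 0), (0, 0), (1, 0)], [(0, 0), (0, 0), (1, 0), (0, 0), (0, 0)], [(0, 0), (0, 0), (0, 0), (1, 0), (0, 0)], [(0, 0), (0, 0), (1, 0), (0, 0), (0, 0)], [(0, 0), (0, 0), (0, 0), (0, 0), (1, 0)], [(0, 0), (1, 0), (0, 1), (0, 0), (0, 0)], [(0, 0), (0, 0), (0, 0), (1, 0), (0, -1)], [(0, 0), (0, 0), (0, 0), (1, 0), (0, 0)], [(0, 0), (1, 0), (0, 0), (0, 0), (0, 0)], [(0, 0), (0, 0), (0, 0), (0, 0), (1, 0)], [(0, 0), (0, 0), (0, 0), (1, 0), (0, 0)], [(0, 0), (1, 0), (0, 0), (0, 0), (0, 0)], [(0, 0), (0, 0), (0, 0), (0, 0), (1, 0)], [(0, 0), (0, 0), (1, 0), (0, 0), (0, 0)], [(0, 0), (0, 0), (1, 0), (0, 0), (0, 0)], [(0, 0), (0, 0), (1, 0), (0, 0), (0, 0)], [(0, 0), (1, 0), (0, 0),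 (0, 0), (0, 0)], [(0, 0), (0, 0), (0, 0), (0, 0), (1, 0)], [(0, 0), (0, 0), (1, 0), (0, 0), (0, 0)], [(0, 0), (0, 0), (0, 0), (0, 0), (1, 0)]],
    [[(0, 0), (0, 0), (0, 0), (0, 0), (1, 0)], [(0, 0), (0, 0), (0, 0), (1, 0), (0, 0)], [(0, 0), (0, 0), (0, 0), (0, 0), (1, 0)], [(0, 0), (0, 0), (0, 0), (0, 0), (0, 0)], [(0, 0), (0, 0), (0, 0), (0, 0), (1, 0)], [(0, 0), (0, 0), (1, 0), (0, 0), (0, 0)], [(0, 0), (0, 0), (1, 0), (0, 0), (0, 0)], [(0, 0), (0, 0), (0, 0), (1, 0), (0, 0)], [(0, 0), (0, 0), (0, 0), (0, 0), (1, 0)], [(0, 0), (0, 0), (0, 0), (1, 0), (0, 0)], [(0, 0), (0, 0), (0, 0), (0, 0), (1, 0)], [(0, 0), (0, 0), (1, 0), (0, 0), (0, 1)], [(0, 0), (0, 0), (0, 0), (1, 0), (0, 0)], [(0, 0), (0, 0), (0, 0), (0, 0), (1, 0)], [(0, 0), (1, 0), (0, 0), (0, 0), (0, 0)], [(0, 0), (0, 0), (0, 0), (1, 0), (0, 0)], [(0, 0), (0, 0), (0, 0), (0, 0), (1, 0)], [(0, 0), (0, 0), (0, 0), (1, 0), (0, 0)], [(0, 0), (0, 0), (1, 0), (0, 0), (0, 0)], [(0, 0), (0, 0), (0, 0), (0, 0), (1, 0)], [(0, 0), (0, 0), (1, 0), (0, 0), (0, 0)], [(0, 0), (1, 0), (0,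 0), (0, 0), (0, 0)], [(0, 0), (1, 0), (0, 0), (0, 0), (0, 0)], [(0, 0), (0, 0), (1, 0), (0, 0), (0, 0)], [(0, 0), (0, 0), (1, 0), (0, 0), (0, 0)]],
    [[(0, 0), (0, 0), (1, 0), (0, 0), (0, 0)], [(0, 0), (0, 0), (0, 0), (0, 0), (1, 0)], [(0, 0), (0, 0), (0, 0), (1, 0), (0, 0)], [(0, 0), (0, 0), (0, 0), (0, 0), (1, 0)], [(0, 0), (0, 0), (0, 0), (0, 0), (0, 0)], [(0, 0), (0, 0), (0, 0), (0, 0), (1, 0)], [(0, 0), (0, 0), (0, 0), (1, 0), (0, 0)], [(0, 0), (1, 0), (0, 0), (0, 0), (0, 1)], [(0, 0), (1, 0), (0, 0), (0, 1), (0, 0)], [(0, 0), (0, 0), (0, 0), (0, 0), (1, 0)], [(0, 0), (0, 0), (0, 0), (1, 0), (0, 0)], [(0, 0), (0, 0), (1, 0), (0, 0), (0, -1)], [(0, 0), (0, 0), (1, 0), (0, 0), (0, 0)], [(0, 0), (0, 0), (1, 0), (0, 0), (0, 0)], [(0, 0), (0, 0), (0, 0), (0, 0), (1, 0)], [(0, 0), (1, 0), (0, 0), (0, 0), (0, 0)], [(0, 0), (1, 0), (0, 0), (0, 0), (0, 0)], [(0, 0), (0, 0), (0, 0), (0, 0), (1, 0)], [(0, 0), (1, 0), (0, 0), (0, 0), (0, 0)], [(0, 0), (0, 0), (0, 0), (1, 0), (0, 0)], [(0, 0), (1, 0), (0, 0), (0, 0), (0, 0)], [(0, 0), (0, 0),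 (0, 0), (1, 0), (0, 0)], [(0, 0), (0, 0), (0, 0), (0, 0), (1, 0)], [(0, 0), (0, 0), (0, 0), (1, 0), (0, 0)], [(0, 0), (0, 0), (0, 0), (0, 0), (1, 0)]],
    [[(0, 0), (0, 0), (0, 0), (0, 0), (1, 0)], [(0, 0), (0, 0), (1, 0), (0, 0), (0, 0)], [(0, 0), (0, 0), (0, 0), (0, 0), (1, 0)], [(0, 0), (0, 0), (1, 0), (0, 0), (0, 0)], [(0, 0), (0, 0), (0, 0), (0, 0), (1, 0)], [(0, 0), (0, 0), (0, 0), (0, 0), (0, 0)], [(0, 0), (0, 0), (0, 0), (1, 0), (-1, 0)], [(0, 0), (0, 0), (0, 0), (1, 0), (1, 0)], [(0, 0), (0, 0), (0, 0), (0, 0), (1, 0)], [(0, 0), (0, 0), (1, 0), (1, 0), (0, 0)], [(0, 0), (0, 0), (0, 0), (0, 0), (1, 0)], [(0, 0), (0, 0), (0, 0), (1, 0), (0, 0)], [(0, 0), (0, 0), (1, 0), (0, 0), (0, 0)], [(0, 0), (0, 0), (0, 0), (0, 0), (1, 0)], [(0, 0), (0, 0), (1, 0), (0, 0), (0, 0)], [(0, 0), (1, 0), (0, 0), (0, 0), (0, 0)], [(0, 0), (0, 0), (0, 0), (0, 0), (1, 0)], [(0, 0), (1, 0), (0, 0), (0, 0), (0, 0)], [(0, 0), (1, 0), (0, 0), (0, 0), (0, 0)], [(0, 0), (0, 0), (0, 0), (0, 0), (1, 0)], [(0, 0), (0, 0), (0, 0), (1, 0), (0, 0)], [(0, 0),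 (1, 0), (0, 0), (0, 0), (0, 0)], [(0, 0), (0, 0), (0, 0), (1, 0), (0, 0)], [(0, 0), (1, 0), (0, 0), (0, 0), (0, 1)], [(0, 0), (0, 0), (0, 0), (1, 0), (0, 0)]],
    [[(0, 0), (0, 0), (0, 0), (1, 0), (0, 0)], [(0, 0), (0, 0), (0, 0), (1, 0), (0, 0)], [(0, 0), (0, 0), (1, 0), (0, 0), (0, 0)], [(0, 0), (0, 0), (1, 0), (0, 0), (0, 0)], [(0, 0), (0, 0), (0, 0), (1, 0), (0, 0)], [(0, 0), (0, 0), (0, 0), (1, 0), (-1, 0)], [(0, 0), (0, 0), (0, 0), (0, 0), (0, 0)], [(0, 0), (0, 0), (0, 0), (0, 0), (1, 0)], [(0, 0), (0, 0), (0, 0), (1, 0), (1, 0)], [(0, 0), (0, 0), (0, 0), (1, 0), (0, 0)], [(0, 0), (0, 0), (1, 0), (0, 0), (1, 0)], [(0, 0), (0, 0), (0, 0), (0, 0), (1, 0)], [(0, 0), (0, 0), (0, 0), (1, 0), (0, 0)], [(0, 0), (0, 0), (1, 0), (0, 0), (0, 0)], [(0, 0), (0, 0), (1, 0), (0, 0), (0, 0)], [(0, 0), (0, 0), (0, 0), (0, 0), (1, 0)], [(0, 0), (1, 0), (0, 0), (0, 0), (0, 0)], [(0, 0), (0, 0), (0, 0), (1, 0), (0, 0)], [(0, 0), (1, 0), (0, 0), (0, 0), (0, 0)], [(0, 0), (1, 0), (0, 0), (0, 0), (0, 0)], [(0, 0), (0, 0), (0, 0), (0, 0), (1, 0)], [(0,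 0), (0, 0), (0, 0), (0, 0), (1, 0)], [(0, 0), (1, 0), (0, 0), (0, 0), (0, 0)], [(0, 0), (0, 0), (0, 0), (0, 0), (1, 0)], [(0, 0), (1, 0), (0, 0), (0, 0), (1, 0)]],
    [[(0, 0), (0, 0), (1, 0), (0, 0), (0, 0)], [(0, 0), (0, 0), (1, 0), (0, 0), (0, 0)], [(0, 0), (0, 0), (0, 0), (1, 0), (0, 0)], [(0, 0), (0, 0), (0, 0), (1, 0), (0, 0)], [(0, 0), (1, 0), (0, 0), (0, 0), (0, 1)], [(0, 0), (0, 0), (0, 0), (1, 0), (1, 0)], [(0, 0), (0, 0), (0, 0), (0, 0), (1, 0)], [(0, 0), (0, 0), (0, 0), (0, 0), (0, 0)], [(0, 0), (0, 0), (0, 0), (1, 0), (-1, 0)], [(0, 0), (0, 0), (1, 0), (0, 0), (-1, 0)], [(0, 0), (0, 0), (0, 0), (1, 0), (0, 0)], [(0, 0), (0, 0), (1, 0), (0, -1), (0, 0)], [(0, 0), (0, 0), (0, 0), (0, 0), (1, 0)], [(0, 0), (0, 0), (1, 0), (0, 0), (0, 0)], [(0, 0), (0, 0), (0, 0), (1, 0), (0, 0)], [(0, 0), (1, 0), (-1, 0), (0, 0), (0, 0)], [(0, 0), (0, 0), (0, 0), (1, 0), (-1, 0)], [(0, 0), (1, 0), (0, 0), (0, 0), (0, -1)], [(0, 0), (0, 0), (0, 0), (0, 0), (1, 0)], [(0, 0), (0, 0), (0, 0), (1, 0), (0, 0)], [(0, 0), (1, 0), (0, 0), (1, 0), (0,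 0)], [(0, 0), (0, 0), (0, 0), (1, 0), (0, 0)], [(0, 0), (0, 0), (1, 0), (0, 0), (-1, 0)], [(0, 0), (0, 0), (0, 0), (1, 0), (0, 0)], [(0, 0), (1, 0), (0, 0), (0, 0), (0, 0)]],
    [[(0, 0), (0, 0), (1, 0), (0, 0), (0, 0)], [(0, 0), (0, 0), (0, 0), (0, 0), (1, 0)], [(0, 0), (0, 0), (1, 0), (0, 0), (0, 0)], [(0, 0), (0, 0), (0, 0), (0, 0), (1, 0)], [(0, 0), (1, 0), (0, 0), (0, 1), (0, 0)], [(0, 0), (0, 0), (0, 0), (0, 0), (1, 0)], [(0, 0), (0, 0), (0, 0), (1, 0), (1, 0)], [(0, 0), (0, 0), (0, 0), (1, 0), (-1, 0)], [(0, 0), (0, 0), (0, 0), (0, 0), (0, 0)], [(0, 0), (0, 0), (0, 0), (0, 0), (1, 0)], [(0, 0), (0, 0), (1, 0), (-1, 0), (0, 0)], [(0, 0), (0, 0), (1, 0), (0, 0), (0, -1)], [(0, 0), (0, 0), (1, 0), (0, 0), (0, 0)], [(0, 0), (0, 0), (0, 0), (1, 0), (0, 0)], [(0, 0), (0, 0), (0, 0), (0, 0), (1, 0)], [(0, 0), (0, 0), (0, 0), (1, 0), (-1, 0)], [(0, 0), (1, 0), (-1, 0), (0, 0), (0, 0)], [(0, 0), (0, 0), (0, 0), (0, 0), (1, 0)], [(0, 0), (0, 0), (0, 0), (1, 0), (0, 0)], [(0, 0), (1, 0), (0, 0), (0, -1), (0, 0)], [(0, 0), (1, 0), (0, 0),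 (0, 0), (1, 0)], [(0, 0), (0, 0), (1, 0), (0, 0), (0, -1)], [(0, 0), (0, 0), (0, 0), (0, 0), (1, 0)], [(0, 0), (1, 0), (0, 0), (0, 0), (0, 0)], [(0, 0), (0, 0), (0, 0), (0, 0), (1, 0)]],
    [[(0, 0), (0, 0), (0, 0), (0, 0), (1, 0)], [(0, 0), (1, 0), (0, 1), (0, 0), (0, 0)], [(0, 0), (0, 0), (0, 0), (0, 0), (1, 0)], [(0, 0), (0, 0), (0, 0), (1, 0), (0, 0)], [(0, 0), (0, 0), (0, 0), (0, 0), (1, 0)], [(0, 0), (0, 0), (1, 0), (1, 0), (0, 0)], [(0, 0), (0, 0), (0, 0), (1, 0), (0, 0)], [(0, 0), (0, 0), (1, 0), (0, 0), (-1, 0)], [(0, 0), (0, 0), (0, 0), (0, 0), (1, 0)], [(0, 0), (0, 0), (0, 0), (0, 0), (0, 0)], [(0, 0), (0, 0), (0, 0), (0, 0), (1, 0)], [(0, 0), (0, 0), (0, 0), (1, 0), (0, 1)], [(0, 0), (0, 0), (1, 0), (0, 0), (1, 0)], [(0, 0), (0, 0), (0, 0), (0, 0), (1, 0)], [(0, 0), (0, 0), (0, 0), (1, 0), (0, 0)], [(0, 0), (0, 0), (1, 0), (0, 0), (0, 0)], [(0, 0), (0, 0), (0, 0), (0, 0), (1, 0)], [(0, 0), (1, 0), (0, -1), (0, 0), (0, 0)], [(0, 0), (0, 0), (0, 0), (1, 0), (0, -1)], [(0, 0), (0, 0), (0, 0), (0, 0), (1, 0)], [(0, 0), (0, 0),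 (0, 0), (1, 0), (0, 1)], [(0, 0), (0, 0), (0, 0), (1, 0), (0, 0)], [(0, 0), (1, 0), (0, 0), (1, 0), (0, 0)], [(0, 0), (0, 0), (0, 0), (1, 0), (0, 0)], [(0, 0), (1, 0), (0, 0), (0, 0), (0, 0)]],
    [[(0, 0), (0, 0), (0, 0), (1, 0), (0, 0)], [(0, 0), (0, 0), (0, 0), (0, 0), (1, 0)], [(0, 0), (1, 0), (0, 1), (0, 0), (0, 0)], [(0, 0), (0, 0), (0, 0), (0, 0), (1, 0)], [(0, 0), (0, 0), (0, 0), (1, 0), (0, 0)], [(0, 0), (0, 0), (0, 0), (0, 0), (1, 0)], [(0, 0), (0, 0), (1, 0), (0, 0), (1, 0)], [(0, 0), (0, 0), (0, 0), (1, 0), (0, 0)], [(0, 0), (0, 0), (1, 0), (-1, 0), (0, 0)], [(0, 0), (0, 0), (0, 0), (0, 0), (1, 0)], [(0, 0), (0, 0), (0, 0), (0, 0), (0, 0)], [(0, 0), (0, 0), (0, 0), (1, 0), (0, -1)], [(0, 0), (0, 0), (0, 0), (1, 0), (0, 0)], [(0, 0), (0, 0), (1, 0), (1, 0), (0, 0)], [(0, 0), (0, 0), (0, 0), (0, 0), (1, 0)], [(0, 0), (0, 0), (0, 0), (1, 0), (0, 0)], [(0, 0), (0, 0), (1, 0), (0, 0), (0, 0)], [(0, 0), (0, 0), (0, 0), (0, 0), (1, 0)], [(0, 0), (0, 0), (0, 0), (1, 0), (0, 1)], [(0, 0), (1, 0), (0, -1), (0, 0), (0, 0)], [(0, 0),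 (0, 0), (0, 0), (1, 0), (0, -1)], [(0, 0), (1, 0), (0, 0), (0, 0), (1, 0)], [(0, 0), (0, 0), (0, 0), (0, 0), (1, 0)], [(0, 0), (1, 0), (0, 0), (0, 0), (0, 0)], [(0, 0), (0, 0), (0, 0), (0, 0), (1, 0)]],
    [[(0, 0), (1, 0), (0, 0), (0, 0), (0, 1)], [(0, 0), (0, 0), (0, 0), (1, 0), (0, 1)], [(0, 0), (0, 0), (0, 0), (1, 0), (0, -1)], [(0, 0), (0, 0), (1, 0), (0, 0), (0, 1)], [(0, 0), (0, 0), (1, 0), (0, 0), (0, -1)], [(0, 0), (0, 0), (0, 0), (1, 0), (0, 0)], [(0, 0), (0, 0), (0, 0), (0, 0), (1, 0)], [(0, 0), (0, 0), (1, 0), (0, -1), (0, 0)], [(0, 0), (0, 0), (1, 0), (0, 0), (0, -1)], [(0, 0), (0, 0), (0, 0), (1, 0), (0, 1)], [(0, 0), (0, 0), (0, 0), (1, 0), (0, -1)], [(0, 0), (0, 0), (0, 0), (0, 0), (0, 0)], [(0, 0), (0, 0), (0, 0), (0, 0), (1, 0)], [(0, 0), (0, 0), (0, 0), (1, 0), (0, 0)], [(0, 0), (0, 0), (1, 0), (0, 0), (0, 1)], [(0, 0), (0, 0), (1, 0), (0, 0), (0, 0)], [(0, 0), (0, 0), (1, 0), (0, 0), (0, 0)], [(0, 0), (0, 0), (0, 0), (1, 0), (0, 1)], [(0, 0), (0, 0), (0, 0), (0, 0), (1, 0)], [(0, 0), (0, 0), (0, 0), (1, 0), (0, -1)], [(0,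 0), (1, 0), (0, -1), (0, 0), (0, 0)], [(0, 0), (1, 0), (0, 0), (0, -1), (0, 0)], [(0, 0), (1, 0), (0, 0), (0, 0), (0, -1)], [(0, 0), (1, 0), (0, 0), (0, 0), (0, 0)], [(0, 0), (1, 0), (0, 0), (0, 0), (0, 0)]],
    [[(0, 0), (1, 0), (0, 0), (0, 0), (0, 0)], [(0, 0), (1, 0), (0, 0), (0, 0), (0, 0)], [(0, 0), (0, 0), (0, 0), (1, 0), (0, 0)], [(0, 0), (0, 0), (0, 0), (1, 0), (0, 0)], [(0, 0), (0, 0), (1, 0), (0, 0), (0, 0)], [(0, 0), (0, 0), (1, 0), (0, 0), (0, 0)], [(0, 0), (0, 0), (0, 0), (1, 0), (0, 0)], [(0, 0), (0, 0), (0, 0), (0, 0), (1, 0)], [(0, 0), (0, 0), (1, 0), (0, 0), (0, 0)], [(0, 0), (0, 0), (1, 0), (0, 0), (1, 0)], [(0, 0), (0, 0), (0, 0), (1, 0), (0, 0)], [(0, 0), (0, 0), (0, 0), (0, 0), (1, 0)], [(0, 0), (0, 0), (0, 0), (0, 0), (0, 0)], [(0, 0), (0, 0), (0, 0), (1, 0), (-1, 0)], [(0, 0), (0, 0), (0, 0), (1, 0), (0, 0)], [(0, 0), (0, 0), (0, 0), (0, 0), (1, 0)], [(0, 0), (0, 0), (1, 0), (0, 0), (-1, 0)], [(0, 0), (0, 0), (1, 0), (0, 0), (0, 0)], [(0, 0), (0, 0), (1, 0), (0, 0), (0, 0)], [(0, 0), (0, 0), (0, 0), (1, 0), (0, 0)],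 [(0, 0), (0, 0), (0, 0), (0, 0), (1, 0)], [(0, 0), (0, 0), (0, 0), (0, 0), (1, 0)], [(0, 0), (0, 0), (0, 0), (1, 0), (1, 0)], [(0, 0), (0, 0), (0, 0), (0, 0), (1, 0)], [(0, 0), (0, 0), (1, 0), (0, 0), (0, 0)]],
    [[(0, 0), (1, 0), (0, 0), (0, 0), (0, 0)], [(0, 0), (0, 0), (0, 0), (0, 0), (1, 0)], [(0, 0), (1, 0), (0, 0), (0, 0), (0, 0)], [(0, 0), (0, 0), (0, 0), (0, 0), (1, 0)], [(0, 0), (0, 0), (1, 0), (0, 0), (0, 0)], [(0, 0), (0, 0), (0, 0), (0, 0), (1, 0)], [(0, 0), (0, 0), (1, 0), (0, 0), (0, 0)], [(0, 0), (0, 0), (1, 0), (0, 0), (0, 0)], [(0, 0), (0, 0), (0, 0), (1, 0), (0, 0)], [(0, 0), (0, 0), (0, 0), (0, 0), (1, 0)], [(0, 0), (0, 0), (1, 0), (1, 0), (0, 0)], [(0, 0), (0, 0), (0, 0), (1, 0), (0, 0)], [(0, 0), (0, 0), (0, 0), (1, 0), (-1, 0)], [(0, 0), (0, 0), (0, 0), (0, 0), (0, 0)], [(0, 0), (0, 0), (0, 0), (0, 0), (1, 0)], [(0, 0), (0, 0), (1, 0), (0, 0), (0, 1)], [(0, 0), (0, 0), (0, 0), (1, 0), (0, 0)], [(0, 0), (0, 0), (0, 0), (0, 0), (1, 0)], [(0, 0), (0, 0), (1, 0), (0, 0), (0, 0)], [(0, 0), (0, 0), (1, 0), (0, 0), (0,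 0)], [(0, 0), (0, 0), (0, 0), (1, 0), (0, 0)], [(0, 0), (0, 0), (0, 0), (1, 0), (1, 0)], [(0, 0), (0, 0), (0, 0), (0, 0), (1, 0)], [(0, 0), (0, 0), (1, 0), (0, 0), (0, 0)], [(0, 0), (0, 0), (0, 0), (0, 0), (1, 0)]],
    [[(0, 0), (0, 0), (0, 0), (0, 0), (1, 0)], [(0, 0), (0, 0), (0, 0), (1, 0), (0, 0)], [(0, 0), (0, 0), (0, 0), (0, 0), (1, 0)], [(0, 0), (1, 0), (0, 0), (0, 0), (0, 0)], [(0, 0), (0, 0), (0, 0), (0, 0), (1, 0)], [(0, 0), (0, 0), (1, 0), (0, 0), (0, 0)], [(0, 0), (0, 0), (1, 0), (0, 0), (0, 0)], [(0, 0), (0, 0), (0, 0), (1, 0), (0, 0)], [(0, 0), (0, 0), (0, 0), (0, 0), (1, 0)], [(0, 0), (0, 0), (0, 0), (1, 0), (0, 0)], [(0, 0), (0, 0), (0, 0), (0, 0), (1, 0)], [(0, 0), (0, 0), (1, 0), (0, 0), (0, 1)], [(0, 0), (0, 0), (0, 0), (1, 0), (0, 0)], [(0, 0), (0, 0), (0, 0), (0, 0), (1, 0)], [(0, 0), (0, 0), (0, 0), (0, 0), (0, 0)], [(0, 0), (0, 0), (0, 0), (1, 0), (0, 0)], [(0, 0), (0, 0), (0, 0), (0, 0), (1, 0)], [(0, 0), (0, 0), (0, 0), (1, 0), (0, 0)], [(0, 0), (0, 0), (1, 0), (0, 0), (0, 0)], [(0, 0), (0, 0), (0, 0), (0, 0),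 (1, 0)], [(0, 0), (0, 0), (1, 0), (0, 0), (0, 0)], [(0, 0), (0, 0), (1, 0), (0, 0), (0, 1)], [(0, 0), (0, 0), (1, 0), (0, 1), (0, 0)], [(0, 0), (0, 0), (1, 0), (0, 0), (0, 0)], [(0, 0), (0, 0), (1, 0), (0, 0), (0, 0)]],
    [[(0, 0), (1, 0), (0, 0), (0, 0), (0, 0)], [(0, 0), (1, 0), (0, 0), (0, 0), (0, 0)], [(0, 0), (0, 0), (0, 0), (1, 0), (0, 0)], [(0, 0), (0, 0), (0, 0), (1, 0), (0, 0)], [(0, 0), (1, 0), (0, 0), (0, 0), (0, 0)], [(0, 0), (1, 0), (0, 0), (0, 0), (0, 0)], [(0, 0), (0, 0), (0, 0), (0, 0), (1, 0)], [(0, 0), (1, 0), (-1, 0), (0, 0), (0, 0)], [(0, 0), (0, 0), (0, 0), (1, 0), (-1, 0)], [(0, 0), (0, 0), (1, 0), (0, 0), (0, 0)], [(0, 0), (0, 0), (0, 0), (1, 0), (0, 0)], [(0, 0), (0, 0), (1, 0), (0, 0), (0, 0)], [(0, 0), (0, 0), (0, 0), (0, 0), (1, 0)], [(0, 0), (0, 0), (1, 0), (0, 0), (0, 1)], [(0, 0), (0, 0), (0, 0), (1, 0), (0, 0)], [(0, 0), (0, 0), (0, 0), (0, 0), (0, 0)], [(0, 0), (0, 0), (0, 0), (1, 0), (-1, 0)], [(0, 0), (0, 0), (1, 0), (0, 0), (0, -1)], [(0, 0), (0, 0), (0, 0), (0, 0), (1, 0)], [(0, 0), (0, 0), (0, 0),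 (1, 0), (0, 0)], [(0, 0), (0, 0), (1, 0), (1, 0), (0, 0)], [(0, 0), (0, 0), (0, 0), (1, 0), (0, 0)], [(0, 0), (0, 0), (1, 0), (0, 0), (0, 0)], [(0, 0), (0, 0), (0, 0), (1, 0), (0, 0)], [(0, 0), (0, 0), (1, 0), (0, 0), (0, -1)]],
    [[(0, 0), (1, 0), (0, 0), (0, 0), (0, 0)], [(0, 0), (0, 0), (0, 0), (0, 0), (1, 0)], [(0, 0), (1, 0), (0, 0), (0, 0), (0, 0)], [(0, 0), (0, 0), (0, 0), (0, 0), (1, 0)], [(0, 0), (1, 0), (0, 0), (0, 0), (0, 0)], [(0, 0), (0, 0), (0, 0), (0, 0), (1, 0)], [(0, 0), (1, 0), (0, 0), (0, 0), (0, 0)], [(0, 0), (0, 0), (0, 0), (1, 0), (-1, 0)], [(0, 0), (1, 0), (-1, 0), (0, 0), (0, 0)], [(0, 0), (0, 0), (0, 0), (0, 0), (1, 0)], [(0, 0), (0, 0), (1, 0), (0, 0), (0, 0)], [(0, 0), (0, 0), (1, 0), (0, 0), (0, 0)], [(0, 0), (0, 0), (1, 0), (0, 0), (-1, 0)], [(0, 0), (0, 0), (0, 0), (1, 0), (0, 0)], [(0, 0), (0, 0), (0, 0), (0, 0), (1, 0)], [(0, 0), (0, 0), (0, 0), (1, 0), (-1, 0)], [(0, 0), (0, 0), (0, 0), (0, 0), (0, 0)], [(0, 0), (0, 0), (0, 0), (0, 0), (1, 0)], [(0, 0), (0, 0), (0, 0), (1, 0), (0, 0)], [(0, 0), (0,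 0), (1, 0), (0, -1), (0, 0)], [(0, 0), (0, 0), (1, 0), (0, 0), (1, 0)], [(0, 0), (0, 0), (1, 0), (0, 0), (0, 0)], [(0, 0), (0, 0), (0, 0), (0, 0), (1, 0)], [(0, 0), (0, 0), (1, 0), (0, 0), (1, 0)], [(0, 0), (0, 0), (0, 0), (0, 0), (1, 0)]],
    [[(0, 0), (0, 0), (0, 0), (0, 0), (1, 0)], [(0, 0), (0, 0), (1, 0), (0, 0), (0, 0)], [(0, 0), (0, 0), (0, 0), (0, 0), (1, 0)], [(0, 0), (0, 0), (0, 0), (1, 0), (0, 0)], [(0, 0), (0, 0), (0, 0), (0, 0), (1, 0)], [(0, 0), (1, 0), (0, 0), (0, 0), (0, 0)], [(0, 0), (0, 0), (0, 0), (1, 0), (0, 0)], [(0, 0), (1, 0), (0, 0), (0, 0), (0, -1)], [(0, 0), (0, 0), (0, 0), (0, 0), (1, 0)], [(0, 0), (1, 0), (0, -1), (0, 0), (0, 0)], [(0, 0), (0, 0), (0, 0), (0, 0), (1, 0)], [(0, 0), (0, 0), (0, 0), (1, 0), (0, 1)], [(0, 0), (0, 0), (1, 0), (0, 0), (0, 0)], [(0, 0), (0, 0), (0, 0), (0, 0), (1, 0)], [(0, 0), (0, 0), (0, 0), (1, 0), (0, 0)], [(0, 0), (0, 0), (1, 0), (0, 0), (0, -1)], [(0, 0), (0, 0), (0, 0), (0, 0), (1, 0)], [(0, 0), (0, 0), (0, 0), (0, 0), (0, 0)], [(0, 0), (0, 0), (0, 0), (1, 0), (0, -1)], [(0, 0),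 (0, 0), (0, 0), (0, 0), (1, 0)], [(0, 0), (0, 0), (0, 0), (1, 0), (0, 1)], [(0, 0), (0, 0), (0, 0), (1, 0), (0, 0)], [(0, 0), (0, 0), (1, 0), (0, -1), (0, 0)], [(0, 0), (0, 0), (0, 0), (1, 0), (0, 0)], [(0, 0), (1, 0), (0, 0), (0, -1), (0, 0)]],
    [[(0, 0), (0, 0), (1, 0), (0, 0), (0, 0)], [(0, 0), (0, 0), (1, 0), (0, 0), (0, 0)], [(0, 0), (0, 0), (1, 0), (0, 0), (0, 0)], [(0, 0), (0, 0), (1, 0), (0, 0), (0, 0)], [(0, 0), (1, 0), (0, 0), (0, 0), (0, 0)], [(0, 0), (1, 0), (0, 0), (0, 0), (0, 0)], [(0, 0), (1, 0), (0, 0), (0, 0), (0, 0)], [(0, 0), (0, 0), (0, 0), (0, 0), (1, 0)], [(0, 0), (0, 0), (0, 0), (1, 0), (0, 0)], [(0, 0), (0, 0), (0, 0), (1, 0), (0, -1)], [(0, 0), (0, 0), (0, 0), (1, 0), (0, 1)], [(0, 0), (0, 0), (0, 0), (0, 0), (1, 0)], [(0, 0), (0, 0), (1, 0), (0, 0), (0, 0)], [(0, 0), (0, 0), (1, 0), (0, 0), (0, 0)], [(0, 0), (0, 0), (1, 0), (0, 0), (0, 0)], [(0, 0), (0, 0), (0, 0), (0, 0), (1, 0)], [(0, 0), (0, 0), (0, 0), (1, 0), (0, 0)], [(0, 0), (0, 0), (0, 0), (1, 0), (0, -1)], [(0, 0), (0, 0), (0, 0), (0, 0), (0, 0)], [(0,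 0), (0, 0), (0, 0), (1, 0), (0, 1)], [(0, 0), (0, 0), (0, 0), (0, 0), (1, 0)], [(0, 0), (0, 0), (0, 0), (0, 0), (1, 0)], [(0, 0), (0, 0), (0, 0), (1, 0), (0, 0)], [(0, 0), (0, 0), (0, 0), (0, 0), (1, 0)], [(0, 0), (0, 0), (0, 0), (1, 0), (0, 0)]],
    [[(0, 0), (0, 0), (0, 0), (1, 0), (0, 0)], [(0, 0), (0, 0), (0, 0), (0, 0), (1, 0)], [(0, 0), (0, 0), (1, 0), (0, 0), (0, 0)], [(0, 0), (0, 0), (0, 0), (0, 0), (1, 0)], [(0, 0), (0, 0), (0, 0), (1, 0), (0, 0)], [(0, 0), (0, 0), (0, 0), (0, 0), (1, 0)], [(0, 0), (1, 0), (0, 0), (0, 0), (0, 0)], [(0, 0), (0, 0), (0, 0), (1, 0), (0, 0)], [(0, 0), (1, 0), (0, 0), (0, -1), (0, 0)], [(0, 0), (0, 0), (0, 0), (0, 0), (1, 0)], [(0, 0), (1, 0), (0, -1), (0, 0), (0, 0)], [(0, 0), (0, 0), (0, 0), (1, 0), (0, -1)], [(0, 0), (0, 0), (0, 0), (1, 0), (0, 0)], [(0, 0), (0, 0), (1, 0), (0, 0), (0, 0)], [(0, 0), (0, 0), (0, 0), (0, 0), (1, 0)], [(0, 0), (0, 0), (0, 0), (1, 0), (0, 0)], [(0, 0), (0, 0), (1, 0), (0, -1), (0, 0)], [(0, 0), (0, 0), (0, 0), (0, 0), (1, 0)], [(0, 0), (0, 0), (0, 0), (1, 0), (0, 1)],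 [(0, 0), (0, 0), (0, 0), (0, 0), (0, 0)], [(0, 0), (0, 0), (0, 0), (1, 0), (0, -1)], [(0, 0), (0, 0), (1, 0), (0, 0), (0, -1)], [(0, 0), (0, 0), (0, 0), (0, 0), (1, 0)], [(0, 0), (1, 0), (0, 0), (0, 0), (0, -1)], [(0, 0), (0, 0), (0, 0), (0, 0), (1, 0)]],
    [[(0, 0), (0, 0), (1, 0), (0, 0), (0, 0)], [(0, 0), (0, 0), (1, 0), (0, 0), (0, 0)], [(0, 0), (0, 0), (1, 0), (0, 0), (0, 0)], [(0, 0), (0, 0), (1, 0), (0, 0), (0, 0)], [(0, 0), (1, 0), (0, 0), (0, 0), (0, 0)], [(0, 0), (0, 0), (0, 0), (1, 0), (0, 0)], [(0, 0), (0, 0), (0, 0), (0, 0), (1, 0)], [(0, 0), (1, 0), (0, 0), (1, 0), (0, 0)], [(0, 0), (1, 0), (0, 0), (0, 0), (1, 0)], [(0, 0), (0, 0), (0, 0), (1, 0), (0, 1)], [(0, 0), (0, 0), (0, 0), (1, 0), (0, -1)], [(0, 0), (1, 0), (0, -1), (0, 0), (0, 0)], [(0, 0), (0, 0), (0, 0), (0, 0), (1, 0)], [(0, 0), (0, 0), (0, 0), (1, 0), (0, 0)], [(0, 0), (0, 0), (1, 0), (0, 0), (0, 0)], [(0, 0), (0, 0), (1, 0), (1, 0), (0, 0)], [(0, 0), (0, 0), (1, 0), (0, 0), (1, 0)], [(0, 0), (0, 0), (0, 0), (1, 0), (0, 1)], [(0, 0), (0, 0), (0, 0), (0, 0), (1,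 0)], [(0, 0), (0, 0), (0, 0), (1, 0), (0, -1)], [(0, 0), (0, 0), (0, 0), (0, 0), (0, 0)], [(0, 0), (0, 0), (1, 0), (-1, 0), (0, 0)], [(0, 0), (0, 0), (1, 0), (0, 0), (-1, 0)], [(0, 0), (1, 0), (0, 0), (-1, 0), (0, 0)], [(0, 0), (1, 0), (0, 0), (0, 0), (-1, 0)]],
    [[(0, 0), (0, 0), (0, 0), (1, 0), (0, 0)], [(0, 0), (0, 0), (0, 0), (1, 0), (0, 0)], [(0, 0), (1, 0), (0, 0), (0, 0), (0, 0)], [(0, 0), (1, 0), (0, 0), (0, 0), (0, 0)], [(0, 0), (0, 0), (0, 0), (1, 0), (0, 0)], [(0, 0), (1, 0), (0, 0), (0, 0), (0, 0)], [(0, 0), (0, 0), (0, 0), (0, 0), (1, 0)], [(0, 0), (0, 0), (0, 0), (1, 0), (0, 0)], [(0, 0), (0, 0), (1, 0), (0, 0), (0, -1)], [(0, 0), (0, 0), (0, 0), (1, 0), (0, 0)], [(0, 0), (1, 0), (0, 0), (0, 0), (1, 0)], [(0, 0), (1, 0), (0, 0), (0, -1), (0, 0)], [(0, 0), (0, 0), (0, 0), (0, 0), (1, 0)], [(0, 0), (0, 0), (0, 0), (1, 0), (1, 0)], [(0, 0), (0, 0), (1, 0), (0, 0), (0, 1)], [(0, 0), (0, 0), (0, 0), (1, 0), (0, 0)], [(0, 0), (0, 0), (1, 0), (0, 0), (0, 0)], [(0, 0), (0, 0), (0, 0), (1, 0), (0, 0)], [(0, 0), (0, 0), (0, 0), (0,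 0), (1, 0)], [(0, 0), (0, 0), (1, 0), (0, 0), (0, -1)], [(0, 0), (0, 0), (1, 0), (-1, 0), (0, 0)], [(0, 0), (0, 0), (0, 0), (0, 0), (0, 0)], [(0, 0), (0, 0), (0, 0), (1, 0), (-1, 0)], [(0, 0), (1, 0), (-1, 0), (0, 0), (0, 0)], [(0, 0), (0, 0), (0, 0), (1, 0), (-1, 0)]],
    [[(0, 0), (0, 0), (0, 0), (0, 0), (1, 0)], [(0, 0), (1, 0), (0, 0), (0, 0), (0, 0)], [(0, 0), (0, 0), (0, 0), (0, 0), (1, 0)], [(0, 0), (1, 0), (0, 0), (0, 0), (0, 0)], [(0, 0), (0, 0), (0, 0), (0, 0), (1, 0)], [(0, 0), (0, 0), (0, 0), (1, 0), (0, 0)], [(0, 0), (1, 0), (0, 0), (0, 0), (0, 0)], [(0, 0), (0, 0), (1, 0), (0, 0), (-1, 0)], [(0, 0), (0, 0), (0, 0), (0, 0), (1, 0)], [(0, 0), (1, 0), (0, 0), (1, 0), (0, 0)], [(0, 0), (0, 0), (0, 0), (0, 0), (1, 0)], [(0, 0), (1, 0), (0, 0), (0, 0), (0, -1)], [(0, 0), (0, 0), (0, 0), (1, 0), (1, 0)], [(0, 0), (0, 0), (0, 0), (0, 0), (1, 0)], [(0, 0), (0, 0), (1, 0), (0, 1), (0, 0)], [(0, 0), (0, 0), (1, 0), (0, 0), (0, 0)], [(0, 0), (0, 0), (0, 0), (0, 0), (1, 0)], [(0, 0), (0, 0), (1, 0), (0, -1), (0, 0)], [(0, 0), (0, 0),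 (0, 0), (1, 0), (0, 0)], [(0, 0), (0, 0), (0, 0), (0, 0), (1, 0)], [(0, 0), (0, 0), (1, 0), (0, 0), (-1, 0)], [(0, 0), (0, 0), (0, 0), (1, 0), (-1, 0)], [(0, 0), (0, 0), (0, 0), (0, 0), (0, 0)], [(0, 0), (0, 0), (0, 0), (1, 0), (-1, 0)], [(0, 0), (1, 0), (-1, 0), (0, 0), (0, 0)]],
    [[(0, 0), (0, 0), (0, 0), (1, 0), (0, 0)], [(0, 0), (0, 0), (0, 0), (1, 0), (0, 0)], [(0, 0), (0, 0), (1, 0), (0, 0), (0, 0)], [(0, 0), (0, 0), (1, 0), (0, 0), (0, 0)], [(0, 0), (0, 0), (0, 0), (1, 0), (0, 0)], [(0, 0), (1, 0), (0, 0), (0, 0), (0, 1)], [(0, 0), (0, 0), (0, 0), (0, 0), (1, 0)], [(0, 0), (0, 0), (0, 0), (1, 0), (0, 0)], [(0, 0), (1, 0), (0, 0), (0, 0), (0, 0)], [(0, 0), (0, 0), (0, 0), (1, 0), (0, 0)], [(0, 0), (1, 0), (0, 0), (0, 0), (0, 0)], [(0, 0), (1, 0), (0, 0), (0, 0), (0, 0)], [(0, 0), (0, 0), (0, 0), (0, 0), (1, 0)], [(0, 0), (0, 0), (1, 0), (0, 0), (0, 0)], [(0, 0), (0, 0), (1, 0), (0, 0), (0, 0)], [(0, 0), (0, 0), (0, 0), (1, 0), (0, 0)], [(0, 0), (0, 0), (1, 0), (0, 0), (1, 0)], [(0, 0), (0, 0), (0, 0), (1, 0), (0, 0)], [(0,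 0), (0, 0), (0, 0), (0, 0), (1, 0)], [(0, 0), (1, 0), (0, 0), (0, 0), (0, -1)], [(0, 0), (1, 0), (0, 0), (-1, 0), (0, 0)], [(0, 0), (1, 0), (-1, 0), (0, 0), (0, 0)], [(0, 0), (0, 0), (0, 0), (1, 0), (-1, 0)], [(0, 0), (0, 0), (0, 0), (0, 0), (0, 0)], [(0, 0), (0, 0), (0, 0), (1, 0), (-1, 0)]],
    [[(0, 0), (0, 0), (0, 0), (0, 0), (1, 0)], [(0, 0), (0, 0), (1, 0), (0, 0), (0, 0)], [(0, 0), (0, 0), (0, 0), (0, 0), (1, 0)], [(0, 0), (0, 0), (1, 0), (0, 0), (0, 0)], [(0, 0), (0, 0), (0, 0), (0, 0), (1, 0)], [(0, 0), (0, 0), (0, 0), (1, 0), (0, 0)], [(0, 0), (1, 0), (0, 0), (0, 0), (1, 0)], [(0, 0), (1, 0), (0, 0), (0, 0), (0, 0)], [(0, 0), (0, 0), (0, 0), (0, 0), (1, 0)], [(0, 0), (1, 0), (0, 0), (0, 0), (0, 0)], [(0, 0), (0, 0), (0, 0), (0, 0), (1, 0)], [(0, 0), (1, 0), (0, 0), (0, 0), (0, 0)], [(0, 0), (0, 0), (1, 0), (0, 0), (0, 0)], [(0, 0), (0, 0), (0, 0), (0, 0), (1, 0)], [(0, 0), (0, 0), (1, 0), (0, 0), (0, 0)], [(0, 0), (0, 0), (1, 0), (0, 0), (0, -1)], [(0, 0), (0, 0), (0, 0), (0, 0), (1, 0)], [(0, 0), (1, 0), (0, 0), (0, -1), (0,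 0)], [(0, 0), (0, 0), (0, 0), (1, 0), (0, 0)], [(0, 0), (0, 0), (0, 0), (0, 0), (1, 0)], [(0, 0), (1, 0), (0, 0), (0, 0), (-1, 0)], [(0, 0), (0, 0), (0, 0), (1, 0), (-1, 0)], [(0, 0), (1, 0), (-1, 0), (0, 0), (0, 0)], [(0, 0), (0, 0), (0, 0), (1, 0), (-1, 0)], [(0, 0), (0, 0), (0, 0), (0, 0), (0, 0)]]]"

lemma check4: "check_fam 4 4 L4 W4"
  unfolding L4_def W4_def by code_simp

lemma check5: "check_fam 5 5 L5 W5"
  unfolding L5_def W5_def by code_simp



theorem theorem2:
  fixes M :: "'l measure"
    and mu :: "complex ^ 'd::finite \<Rightarrow> 'l \<Rightarrow> real"
    and xi :: "(complex ^ 'd ^ 'd) set \<Rightarrow> complex ^ 'd ^ 'd \<Rightarrow> 'l \<Rightarrow> real"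
    and k :: real
  assumes d: "CARD('d) \<ge> 4"
    and model: "onto_model_reproducing M mu xi"
    and bound: "\<And>psi phi. pure_state psi \<Longrightarrow> pure_state phi \<Longrightarrow>
                  omega_C M (mu psi) (mu phi) \<ge> k * omega_Q psi phi"
  shows "k < 4 / (real CARD('d) - 1) \<and> (primepow CARD('d) \<longrightarrow> k < 2 / real CARD('d))"
proof -
  define N where "N = CARD('d)"
  have N4: "N \<ge> 4" using d by (simp add: N_def)
  have N3: "CARD('d) \<ge> 3" using d by simp
  define R where "R = real N"
  have R4: "R \<ge> 4" using N4 by (simp add: R_def)
  define t where "t = 1 - sqrt (1 - 1 / R)"
  have t: "t \<ge> 1 / (2 * R)"
    using sqrt_bound[of "1 / R"] R4 by (simp add: t_def)
  define X where "X = 2 ^ (N - 1) * t"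
  have sign: "k * X \<le> 1"
    using sign_family_bound[OF model N3 bound] by (simp add: X_def t_def R_def N_def)
  have two: "(2::real) ^ N = 2 * 2 ^ (N - 1)"
    using N4 by (metis Suc_diff_1 less_le_trans numeral_eq_Suc pos2 power_Suc zero_less_Suc)
  have XL: "X \<ge> 2 ^ (N - 1) / (2 * R)"
    using t unfolding X_def by (simp add: divide_simps)
  have c1: "k < 4 / (R - 1)"
  proof -
    have "real (N * (N - 1)) < real (2 ^ N)" using pow_ineq1[OF N4] by (simp only: of_nat_less_iff)
    hence p: "R * (R - 1) < 2 ^ N" using N4 by (simp add: R_def of_nat_diff)
    have "(R - 1) / 4 < X"
    proof -
      have "(R - 1) / 4 < 2 ^ N / (4 * R)" using p R4 by (simp add: field_simps)
      also have "\<dots> = 2 ^ (N - 1) / (2 * R)" by (simp add: two)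
      finally show ?thesis using XL by simp
    qed
    moreover have "(R - 1) / 4 > 0" using R4 by simp
    ultimately have "k < 1 / ((R - 1) / 4)" using kb sign by blast
    thus ?thesis by simp
  qed
  have c2: "primepow N \<Longrightarrow> k < 2 / R"
  proof -
    assume pp: "primepow N"
    consider "N = 4" | "N = 5" | "N = 6" | "N \<ge> 7" using N4 by linarith
    thus ?thesis
    proof cases
      case 1
      have "k * (real (length L4) * (1 - sqrt (1 - 1 / real_of_int 4))) \<le> 1"
        by (rule list_family[OF model N3 bound _ _ check4]) (simp_all add: 1[unfolded N_def])
      hence kk: "k * (16 * (1 - sqrt (3 / 4))) \<le> 1" by (simp add: L4_def)
      have "sqrt (3 / 4) < sqrt ((7 / 8)^2)" by (rule real_sqrt_less_mono) (simp add: power2_eq_square)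
      hence "sqrt (3 / 4) < 7 / 8" by simp
      hence "16 * (1 - sqrt (3 / 4)) > 2" by simp
      hence "k < 1 / 2" using kb kk by (meson zero_less_numeral)
      thus ?thesis using 1 by (simp add: R_def)
    next
      case 2
      have "k * (real (length L5) * (1 - sqrt (1 - 1 / real_of_int 5))) \<le> 1"
        by (rule list_family[OF model N3 bound _ _ check5]) (simp_all add: 2[unfolded N_def])
      hence kk: "k * (25 * (1 - sqrt (4 / 5))) \<le> 1" by (simp add: L5_def)
      have "sqrt (4 / 5) < sqrt ((9 / 10)^2)" by (rule real_sqrt_less_mono) (simp add: power2_eq_square)
      hence "sqrt (4 / 5) < 9 / 10" by simp
      hence "25 * (1 - sqrt (4 / 5)) > 5 / 2" by simp
      hence "k < 1 / (5 / 2)" using kb kk by (meson zero_less_numeral divide_pos_pos)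
      thus ?thesis using 2 by (simp add: R_def)
    next
      case 3
      thus ?thesis using pp not_pp6 by simp
    next
      case 4
      have "real (2 * N ^ 2) < real (2 ^ N)" using pow_ineq2[OF 4] by (simp only: of_nat_less_iff)
      hence p: "2 * R ^ 2 < 2 ^ N" by (simp add: R_def)
      have "R / 2 < X"
      proof -
        have "R / 2 < 2 ^ N / (4 * R)" using p R4 by (simp add: field_simps power2_eq_square)
        also have "\<dots> = 2 ^ (N - 1) / (2 * R)" by (simp add: two)
        finally show ?thesis using XL by simp
      qed
      moreover have "R / 2 > 0" using R4 by simp
      ultimately have "k < 1 / (R / 2)" using kb sign by blast
      thus ?thesis by simp
    qed
  qed
  show ?thesis using c1 c2 by (simp add: R_def N_def)
qed


end
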